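(* Let $S$ be a finite semigroup with an anti-involution $*$, let $R$ be a commutative ring with $1$, and let $\alpha$ be a twisting from $S$ into $R$ with $\alpha(x,y)=\alpha(y^*,x^* )$ for all $x,y\in S$. Suppose that for each $\mathcal D$-class $D$ there is an idempotent $1_D\in D$ with $1_D^*=1_D$; let $G_D$ be the $\mathcal H$-class of $1_D$. Suppose that for each $\mathcal D$-class $D$ and all $x\,\mathcal L\,1_D$, $y\,\mathcal R\,1_D$, the element $\alpha(x,y)$ is a unit of $R$. Suppose that for each $D$ the twisted group algebra $R^\alpha[G_D]$ (twisting $\alpha|_{G_D\times G_D}$) is cellular with cell datum $(\Lambda_D,M_D,C,* )$, where $*$ is the linear extension of $*|_{G_D}$. Let $\mathcal D$ be the set of $\mathcal D$-classes, $\mathcal L_D$ the set of $\mathcal L$-classes in $D$, $\Lambda=\{(D,\lambda)\mid D\in\mathcal D,\lambda\in\Lambda_D\}$ ordered by $(D_1,\lambda_1)\le(D_2,\lambda_2)$ iff $D_1<_{\mathcal D}D_2$ or ($D_1=D_2$ and $\lambda_1\le\lambda_2$ in $\Lambda_{D_1}$), $M(D,\lambda)=\mathcal L_D\times M_D(\lambda)$, choose for each $L\in\mathcal L_D$ an element $u_L\in L$ with $u_L\,\mathcal R\,1_D$, and set \[C^{(D,\lambda)}_{(L,s)(K,t)}=u_L^*\cdot C^\lambda_{st}\cdot u_K\] (product in $R^\alpha[S]$). Then $R^\alpha[S]$ is cellular with cell datum $(\Lambda,M,C,* )$, where $*$ is the linear extension of $*$ to $R^\alpha[S]$.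
   Context: Green's relations on a semigroup $S$ ($S^1$ = $S$ with identity adjoined): $x\le_{\mathcal R}y$ iff $x\in yS^1$; $x\le_{\mathcal L}y$ iff $x\in S^1y$; $x\le_{\mathcal J}y$ iff $x\in S^1yS^1$; $\mathcal R,\mathcal L,\mathcal J$ the associated equivalences; $\mathcal H=\mathcal R\cap\mathcal L$; $\mathcal D$ generated by $\mathcal R\cup\mathcal L$. For finite $S$, $\mathcal D=\mathcal J$ and $\le_{\mathcal J}$ induces a partial order $\le_{\mathcal D}$ on $\mathcal D$-classes; $<_{\mathcal D}$ is its strict version. An anti-involution of $S$: $(x^* )^*=x$, $(xy)^*=y^*x^*$. A twisting $\alpha:S\times S\to R$ satisfies $\alpha(x,y)\alpha(xy,z)=\alpha(x,yz)\alpha(y,z)$; $R^\alpha[S]$ is the free $R$-module on $S$ with product $x\cdot y=\alpha(x,y)(xy)$. An anti-involution of an $R$-algebra is $R$-linear with $(a^* )^*=a$, $(ab)^*=b^*a^*$. Cellular algebra with cell datum $(\Lambda,M,C,* )$: (C1) $\Lambda$ finite poset, finite sets $M(\lambda)$, and $\{C^\lambda_{st}\}$ an $R$-basis; (C2) $*$ anti-involution with $(C^\lambda_{st})^*=C^\lambda_{ts}$; (C3) for all $\lambda,s,a$ there are $r_a(s',s)\in R$ with $aC^\lambda_{st}\in\sum_{s'}r_a(s',s)C^\lambda_{s't}+A(<\lambda)$ for all $t$, where $A(<\lambda)$ is the span of the $C^\mu_{s''t''}$ with $\mu<\lambda$. *)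

theory Defs
  imports Main
begin

text \<open>A finite semigroup is modelled as a finite type of class semigroup_mult
  (carrier = UNIV). Green's relations, with S^1 = S plus an adjoined identity.\<close>

definition R_le :: "'a::semigroup_mult \<Rightarrow> 'a \<Rightarrow> bool" where
  "R_le x y \<longleftrightarrow> x = y \<or> (\<exists>s. x = y * s)"

definition L_le :: "'a::semigroup_mult \<Rightarrow> 'a \<Rightarrow> bool" where
  "L_le x y \<longleftrightarrow> x = y \<or> (\<exists>s. x = s * y)"

definition J_le :: "'a::semigroup_mult \<Rightarrow> 'a \<Rightarrow> bool" where
  "J_le x y \<longleftrightarrow> x = y \<or> (\<exists>s. x = s * y) \<or> (\<exists>t. x = y * t) \<or> (\<exists>s t. x = s * y * t)"

definition R_eq :: "'a::semigroup_mult \<Rightarrow> 'a \<Rightarrow> bool" where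
  "R_eq x y \<longleftrightarrow> R_le x y \<and> R_le y x"

definition L_eq :: "'a::semigroup_mult \<Rightarrow> 'a \<Rightarrow> bool" where
  "L_eq x y \<longleftrightarrow> L_le x y \<and> L_le y x"

definition H_eq :: "'a::semigroup_mult \<Rightarrow> 'a \<Rightarrow> bool" where
  "H_eq x y \<longleftrightarrow> R_eq x y \<and> L_eq x y"

definition D_eq :: "'a::semigroup_mult \<Rightarrow> 'a \<Rightarrow> bool" where
  "D_eq = (\<lambda>x y. R_eq x y \<or> L_eq x y)\<^sup>*\<^sup>*"

definition D_class :: "'a::semigroup_mult \<Rightarrow> 'a set" where
  "D_class x = {y. D_eq x y}"

definition L_class :: "'a::semigroup_mult \<Rightarrow> 'a set" where
  "L_class x = {y. L_eq x y}"

definition H_class :: "'a::semigroup_mult \<Rightarrow> 'a set" where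
  "H_class x = {y. H_eq x y}"

definition D_classes :: "'a::semigroup_mult set set" where
  "D_classes = range D_class"

definition L_classes_in :: "'a::semigroup_mult set \<Rightarrow> 'a set set" where
  "L_classes_in D = L_class ` D"

definition D_le :: "'a::semigroup_mult set \<Rightarrow> 'a set \<Rightarrow> bool" where
  "D_le D1 D2 \<longleftrightarrow> (\<exists>x\<in>D1. \<exists>y\<in>D2. J_le x y)"

definition D_less :: "'a::semigroup_mult set \<Rightarrow> 'a set \<Rightarrow> bool" where
  "D_less D1 D2 \<longleftrightarrow> D_le D1 D2 \<and> D1 \<noteq> D2"

definition anti_involution :: "('a::semigroup_mult \<Rightarrow> 'a) \<Rightarrow> bool" where
  "anti_involution st \<longleftrightarrow> (\<forall>x. st (st x) = x) \<and> (\<forall>x y. st (x * y) = st y * st x)"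

definition twisting :: "('a::semigroup_mult \<Rightarrow> 'a \<Rightarrow> 'r::comm_ring_1) \<Rightarrow> bool" where
  "twisting \<alpha> \<longleftrightarrow> (\<forall>x y z. \<alpha> x y * \<alpha> (x * y) z = \<alpha> x (y * z) * \<alpha> y z)"

text \<open>The twisted semigroup algebra R^\<alpha>[G] on a (multiplicatively closed) subset G:
  elements are coefficient functions supported on G.\<close>
definition tsa_carrier :: "'a set \<Rightarrow> ('a \<Rightarrow> 'r::comm_ring_1) set" where
  "tsa_carrier G = {f. \<forall>z. z \<notin> G \<longrightarrow> f z = 0}"

definition tsa_mult :: "'a::semigroup_mult set \<Rightarrow> ('a \<Rightarrow> 'a \<Rightarrow> 'r::comm_ring_1)
    \<Rightarrow> ('a \<Rightarrow> 'r) \<Rightarrow> ('a \<Rightarrow> 'r) \<Rightarrow> ('a \<Rightarrow> 'r)" where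
  "tsa_mult G \<alpha> f g = (\<lambda>z. \<Sum>x\<in>G. \<Sum>y\<in>G. if x * y = z then \<alpha> x y * f x * g y else 0)"

definition tsa_delta :: "'a \<Rightarrow> ('a \<Rightarrow> 'r::comm_ring_1)" where
  "tsa_delta x = (\<lambda>z. if z = x then 1 else 0)"

text \<open>Linear extension of an involution st: sum f(x) x \<mapsto> sum f(x) st(x).\<close>
definition star_lin :: "('a \<Rightarrow> 'a) \<Rightarrow> ('a \<Rightarrow> 'r::comm_ring_1) \<Rightarrow> ('a \<Rightarrow> 'r)" where
  "star_lin st f = (\<lambda>z. f (st z))"

definition cell_index :: "'l set \<Rightarrow> ('l \<Rightarrow> 'm set) \<Rightarrow> ('l \<times> 'm \<times> 'm) set" where
  "cell_index \<Lambda> M = {(l, s, t). l \<in> \<Lambda> \<and> s \<in> M l \<and> t \<in> M l}"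

definition cell_lower :: "'l set \<Rightarrow> ('l \<Rightarrow> 'l \<Rightarrow> bool) \<Rightarrow> ('l \<Rightarrow> 'm set)
    \<Rightarrow> ('l \<Rightarrow> 'm \<Rightarrow> 'm \<Rightarrow> 'a \<Rightarrow> 'r::comm_ring_1) \<Rightarrow> 'l \<Rightarrow> ('a \<Rightarrow> 'r) set" where
  "cell_lower \<Lambda> le M C l =
     {f. \<exists>c. f = (\<lambda>z. \<Sum>i\<in>{i\<in>cell_index \<Lambda> M. le (fst i) l \<and> fst i \<noteq> l}.
                         c i * C (fst i) (fst (snd i)) (snd (snd i)) z)}"

definition cellular :: "'a::semigroup_mult set \<Rightarrow> ('a \<Rightarrow> 'a \<Rightarrow> 'r::comm_ring_1) \<Rightarrow> ('a \<Rightarrow> 'a)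
    \<Rightarrow> 'l set \<Rightarrow> ('l \<Rightarrow> 'l \<Rightarrow> bool) \<Rightarrow> ('l \<Rightarrow> 'm set) \<Rightarrow> ('l \<Rightarrow> 'm \<Rightarrow> 'm \<Rightarrow> 'a \<Rightarrow> 'r) \<Rightarrow> bool" where
  "cellular G \<alpha> st \<Lambda> le M C \<longleftrightarrow>
     \<comment> \<open>(C1)\<close>
     finite \<Lambda> \<and>
     (\<forall>l\<in>\<Lambda>. le l l) \<and>
     (\<forall>a\<in>\<Lambda>. \<forall>b\<in>\<Lambda>. le a b \<and> le b a \<longrightarrow> a = b) \<and>
     (\<forall>a\<in>\<Lambda>. \<forall>b\<in>\<Lambda>. \<forall>c\<in>\<Lambda>. le a b \<and> le b c \<longrightarrow> le a c) \<and>
     (\<forall>l\<in>\<Lambda>. finite (M l)) \<and>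
     (\<forall>l\<in>\<Lambda>. \<forall>s\<in>M l. \<forall>t\<in>M l. C l s t \<in> tsa_carrier G) \<and>
     (\<forall>f\<in>tsa_carrier G. \<exists>!c. (\<forall>i. i \<notin> cell_index \<Lambda> M \<longrightarrow> c i = 0) \<and>
         f = (\<lambda>z. \<Sum>i\<in>cell_index \<Lambda> M. c i * C (fst i) (fst (snd i)) (snd (snd i)) z)) \<and>
     \<comment> \<open>(C2): star_lin st is an anti-involution of the algebra, C^l_{st}* = C^l_{ts}\<close>
     (\<forall>f\<in>(tsa_carrier G :: ('a \<Rightarrow> 'r) set). star_lin st f \<in> tsa_carrier G \<and> star_lin st (star_lin st f) = f) \<and>
     (\<forall>f\<in>tsa_carrier G. \<forall>g\<in>tsa_carrier G.
         star_lin st (tsa_mult G \<alpha> f g) = tsa_mult G \<alpha> (star_lin st g) (star_lin st f)) \<and>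
     (\<forall>l\<in>\<Lambda>. \<forall>s\<in>M l. \<forall>t\<in>M l. star_lin st (C l s t) = C l t s) \<and>
     \<comment> \<open>(C3)\<close>
     (\<forall>l\<in>\<Lambda>. \<forall>s\<in>M l. \<forall>a\<in>tsa_carrier G. \<exists>r. \<forall>t\<in>M l.
         (\<lambda>z. tsa_mult G \<alpha> a (C l s t) z - (\<Sum>s'\<in>M l. r s' * C l s' t z))
           \<in> cell_lower \<Lambda> le M C l)"

end

theory Submission
  imports Defs
begin


instantiation option :: (semigroup_mult) monoid_mult
begin
definition one_option :: "'a option" where "one_option = None"
fun times_option :: "'a option \<Rightarrow> 'a option \<Rightarrow> 'a option" where
  "times_option None y = y"
| "times_option (Some x) None = Some x"
| "times_option (Some x) (Some y) = Some (x*y)"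
instance proof
  fix a b c :: "'a option"
  show "a*b*c = a*(b*c)" by (cases a; cases b; cases c) (auto simp: mult.assoc)
  show "1*a = a" by (simp add: one_option_def)
  show "a*1 = a" by (cases a) (simp_all add: one_option_def)
qed
end

lemma None_mult[simp]: "None * y = y" "y * None = y"
  by (simp, cases y, simp_all)
lemma Some_mult[simp]: "Some x * Some y = Some (x*y)" by simp

lemma ex_option: "(\<exists>s::'a option. P s) \<longleftrightarrow> P None \<or> (\<exists>s. P (Some s))"
  by (metis option.exhaust)

lemma R_le_iff: "R_le x y \<longleftrightarrow> (\<exists>s. Some x = Some y * s)"
  by (auto simp: R_le_def ex_option)
lemma L_le_iff: "L_le x y \<longleftrightarrow> (\<exists>s. Some x = s * Some y)"
  by (auto simp: L_le_def ex_option)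
lemma J_le_iff: "J_le x y \<longleftrightarrow> (\<exists>s t. Some x = s * Some y * t)"
  by (auto simp: J_le_def ex_option)

lemma R_le_refl[simp]: "R_le x x" by (simp add: R_le_def)
lemma L_le_refl[simp]: "L_le x x" by (simp add: L_le_def)
lemma J_le_refl[simp]: "J_le x x" by (simp add: J_le_def)

lemma R_le_trans: "R_le x y \<Longrightarrow> R_le y z \<Longrightarrow> R_le x z"
  unfolding R_le_iff by (metis mult.assoc)
lemma L_le_trans: "L_le x y \<Longrightarrow> L_le y z \<Longrightarrow> L_le x z"
  unfolding L_le_iff by (metis mult.assoc)
lemma J_le_trans: "J_le x y \<Longrightarrow> J_le y z \<Longrightarrow> J_le x z"
  unfolding J_le_iff by (metis mult.assoc)
lemma R_le_J: "R_le x y \<Longrightarrow> J_le x y"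
  unfolding R_le_iff J_le_iff by (metis mult_1)
lemma L_le_J: "L_le x y \<Longrightarrow> J_le x y"
  unfolding L_le_iff J_le_iff by (metis mult_1_right)
lemma R_le_mult[simp]: "R_le (x*y) x" unfolding R_le_def by blast
lemma L_le_mult[simp]: "L_le (x*y) y" unfolding L_le_def by blast
lemma J_le_mult1[simp]: "J_le (x*y) x" unfolding J_le_def by blast
lemma J_le_mult2[simp]: "J_le (x*y) y" unfolding J_le_def by blast
lemma L_le_right: "L_le x y \<Longrightarrow> L_le (x*z) (y*z)"
  unfolding L_le_def by (auto simp: mult.assoc)
lemma R_le_left: "R_le x y \<Longrightarrow> R_le (z*x) (z*y)"
  unfolding R_le_def by (auto simp: mult.assoc)

lemma idem_pow:
  fixes c :: "'b::{monoid_mult,finite}"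
  shows "\<exists>n>0. c^n * c^n = c^n"
proof -
  have "\<not> inj (\<lambda>n::nat. c^n)"
  proof
    assume "inj (\<lambda>n::nat. c^n)"
    then have "infinite (range (\<lambda>n::nat. c^n))"
      using finite_imageD infinite_UNIV_nat by blast
    then show False by simp
  qed
  then obtain i j :: nat where ij: "i < j" "c^i = c^j"
    unfolding inj_def by (metis linorder_neqE_nat)
  define p where "p = j - i"
  have p: "p > 0" "j = i + p" using ij by (auto simp: p_def)
  have step: "c^(m+p) = c^m" if "m \<ge> i" for m
  proof -
    have "c^(m+p) = c^(m-i) * c^(i+p)" using that by (simp add: power_add[symmetric])
    also have "\<dots> = c^(m-i) * c^i" using ij p by simp
    also have "\<dots> = c^m" using that by (simp add: power_add[symmetric])
    finally show ?thesis .
  qed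
  have gen: "c^(m + k*p) = c^m" if "m \<ge> i" for m k
  proof (induction k)
    case (Suc k)
    have "c^(m + Suc k * p) = c^((m + k*p) + p)" by (simp add: algebra_simps)
    also have "\<dots> = c^(m+k*p)" using step[of "m+k*p"] that by simp
    finally show ?case using Suc by simp
  qed simp
  define n where "n = (i+1)*p"
  have "i \<le> i*p" using p by simp
  moreover have "n = i*p + p" by (simp add: n_def algebra_simps)
  ultimately have "n \<ge> i" by linarith
  then have "c^(n + (i+1)*p) = c^n" by (rule gen)
  then have "c^n * c^n = c^n" by (simp add: n_def power_add[symmetric])
  moreover have "n > 0" using p by (simp add: n_def)
  ultimately show ?thesis by blast
qed

lemma fix_pow:
  fixes y a c :: "'b::monoid_mult"
  assumes "y = a*y*c"
  shows "y = a^n*y*c^n"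
proof (induction n)
  case (Suc n)
  have "a^Suc n*y*c^Suc n = a^n*(a*y*c)*c^n" by (simp only: power_Suc2[of a] power_Suc[of c] mult.assoc)
  then show ?case using Suc assms by simp
qed simp

lemma stab_right:
  fixes y a c :: "'b::{monoid_mult,finite}"
  assumes "y = a*y*c"
  shows "\<exists>n>0. y = y*c^n"
proof -
  obtain n where n: "n>0" "c^n*c^n = c^n" using idem_pow by blast
  have "y = a^n*y*c^n" using fix_pow[OF assms] .
  also have "\<dots> = a^n*y*c^n*c^n" using n by (simp add: mult.assoc)
  also have "\<dots> = y * c^n" using fix_pow[OF assms, of n] by simp
  finally show ?thesis using n by blast
qed

lemma stab_left:
  fixes y a c :: "'b::{monoid_mult,finite}"
  assumes "y = a*y*c"
  shows "\<exists>n>0. y = a^n*y"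
proof -
  obtain n where n: "n>0" "a^n*a^n = a^n" using idem_pow by blast
  have "y = a^n*y*c^n" using fix_pow[OF assms] .
  also have "\<dots> = a^n*(a^n*y*c^n)" using n by (simp add: mult.assoc[symmetric])
  also have "\<dots> = a^n * y" using fix_pow[OF assms, of n] by simp
  finally show ?thesis using n by blast
qed

lemma R_stable:
  fixes x y :: "'a::{finite,semigroup_mult}"
  assumes "R_le x y" "J_le y x" shows "R_le y x"
proof -
  obtain s where s: "Some x = Some y * s" using assms(1) R_le_iff by blast
  obtain a b where ab: "Some y = a * Some x * b" using assms(2) J_le_iff by blast
  have "Some y = a * Some y * (s*b)" using ab unfolding s by (simp add: mult.assoc)
  then obtain n where n: "n>0" "Some y = Some y * (s*b)^n" using stab_right by blast
  then obtain m where "n = Suc m" by (cases n) auto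
  then have "Some y = Some x * (b * (s*b)^m)" using n s by (simp add: mult.assoc power_Suc)
  then show ?thesis using R_le_iff by blast
qed

lemma L_stable:
  fixes x y :: "'a::{finite,semigroup_mult}"
  assumes "L_le x y" "J_le y x" shows "L_le y x"
proof -
  obtain s where s: "Some x = s * Some y" using assms(1) L_le_iff by blast
  obtain a b where ab: "Some y = a * Some x * b" using assms(2) J_le_iff by blast
  have "Some y = (a*s) * Some y * b" using ab unfolding s by (simp add: mult.assoc)
  then obtain n where n: "n>0" "Some y = (a*s)^n * Some y" using stab_left by blast
  then obtain m where "n = Suc m" by (cases n) auto
  then have "Some y = (a*s)^m * (a*s) * Some y" using n by (metis power_Suc2)
  then have "Some y = ((a*s)^m * a) * Some x" unfolding s by (simp add: mult.assoc)
  then show ?thesis using L_le_iff by blast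
qed

lemma D_eq_J:
  assumes "D_eq x y" shows "J_le x y \<and> J_le y x"
  using assms unfolding D_eq_def
proof (induction rule: rtranclp_induct)
  case (step y z)
  then show ?case unfolding R_eq_def L_eq_def
    by (meson J_le_trans L_le_J R_le_J)
qed simp

lemma J_D_eq:
  fixes x y :: "'a::{finite,semigroup_mult}"
  assumes "J_le x y" "J_le y x" shows "D_eq x y"
proof -
  obtain s t where st: "Some x = s * Some y * t" using assms(1) J_le_iff by blast
  obtain w where w: "s * Some y = Some w"
    by (cases s) auto
  have "L_le w y" using w L_le_iff by metis
  moreover have "J_le y w" using assms(2) w st J_le_iff
    by (metis J_le_trans R_le_J R_le_iff)
  ultimately have "L_le y w" by (rule L_stable)
  have "R_le x w" using w st R_le_iff by metis
  moreover have "J_le w x" using \<open>L_le w y\<close> assms(2) L_le_J J_le_trans by blast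
  ultimately have "R_le w x" by (rule R_stable)
  have "R_eq x w" using \<open>R_le x w\<close> \<open>R_le w x\<close> R_eq_def by blast
  have "L_eq w y" using \<open>L_le w y\<close> \<open>L_le y w\<close> L_eq_def by blast
  show ?thesis unfolding D_eq_def
    using \<open>R_eq x w\<close> \<open>L_eq w y\<close>
    by (metis (mono_tags, lifting) converse_rtranclp_into_rtranclp r_into_rtranclp)
qed

lemma D_eq_iff:
  fixes x y :: "'a::{finite,semigroup_mult}"
  shows "D_eq x y \<longleftrightarrow> J_le x y \<and> J_le y x"
  using D_eq_J J_D_eq by blast



lemma R_le_fix: "R_le y x \<Longrightarrow> a*x = x \<Longrightarrow> a*y = y"
  unfolding R_le_def by (metis mult.assoc)
lemma L_le_fix: "L_le y x \<Longrightarrow> x*a = x \<Longrightarrow> y*a = y"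
  unfolding L_le_def by (metis mult.assoc)

lemma R_le_idem: "e*e = e \<Longrightarrow> R_le y e \<Longrightarrow> e*y = y"
  using R_le_fix by blast
lemma L_le_idem: "e*e = e \<Longrightarrow> L_le y e \<Longrightarrow> y*e = y"
  using L_le_fix by blast
lemma R_le_idem_ex: "e*e = e \<Longrightarrow> R_le e y \<Longrightarrow> \<exists>w. e = y*w"
  unfolding R_le_def by metis
lemma L_le_idem_ex: "e*e = e \<Longrightarrow> L_le e y \<Longrightarrow> \<exists>w. e = w*y"
  unfolding L_le_def by metis

lemma R_eq_sym: "R_eq x y \<Longrightarrow> R_eq y x" by (simp add: R_eq_def)
lemma L_eq_sym: "L_eq x y \<Longrightarrow> L_eq y x" by (simp add: L_eq_def)
lemma R_eq_trans: "R_eq x y \<Longrightarrow> R_eq y z \<Longrightarrow> R_eq x z" unfolding R_eq_def using R_le_trans by blast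
lemma L_eq_trans: "L_eq x y \<Longrightarrow> L_eq y z \<Longrightarrow> L_eq x z" unfolding L_eq_def using L_le_trans by blast
lemma L_class_eq: "L_eq x y \<Longrightarrow> L_class x = L_class y"
  unfolding L_class_def using L_eq_sym L_eq_trans by blast
lemma L_class_mem: "y \<in> L_class x \<Longrightarrow> L_class x = L_class y"
  unfolding L_class_def using L_class_eq L_class_def by fastforce
lemma L_class_self: "x \<in> L_class x" by (simp add: L_class_def L_eq_def)

abbreviation Jeq where "Jeq x y \<equiv> J_le x y \<and> J_le y x"

lemma D_class_iff:
  fixes x y :: "'a::{finite,semigroup_mult}"
  shows "y \<in> D_class x \<longleftrightarrow> Jeq x y"
  by (simp add: D_class_def D_eq_iff)
lemma D_class_eq_iff:
  fixes x y :: "'a::{finite,semigroup_mult}"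
  shows "D_class x = D_class y \<longleftrightarrow> Jeq x y"
  unfolding D_class_def D_eq_iff by (auto intro: J_le_trans)
lemma D_class_mem:
  fixes x y :: "'a::{finite,semigroup_mult}"
  shows "y \<in> D_class x \<Longrightarrow> D_class x = D_class y"
  using D_class_iff D_class_eq_iff by blast
lemma D_class_self:
  fixes x :: "'a::{finite,semigroup_mult}"
  shows "x \<in> D_class x" by (simp add: D_class_iff)
lemma D_le_iff:
  fixes x y :: "'a::{finite,semigroup_mult}"
  shows "D_le (D_class x) (D_class y) \<longleftrightarrow> J_le x y"
proof
  assume "D_le (D_class x) (D_class y)"
  then obtain a b where "a \<in> D_class x" "b \<in> D_class y" "J_le a b" unfolding D_le_def by blast
  then show "J_le x y" unfolding D_class_iff using J_le_trans by blast
next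
  assume "J_le x y" then show "D_le (D_class x) (D_class y)"
    unfolding D_le_def using D_class_self by blast
qed

lemma R_eq_J: "R_eq x y \<Longrightarrow> Jeq x y" unfolding R_eq_def using R_le_J by blast
lemma L_eq_J: "L_eq x y \<Longrightarrow> Jeq x y" unfolding L_eq_def using L_le_J by blast

context
  fixes st :: "'a::{finite,semigroup_mult} \<Rightarrow> 'a"
  assumes inv: "anti_involution st"
begin

lemma st_st[simp]: "st (st x) = x" using inv by (simp add: anti_involution_def)
lemma st_mult[simp]: "st (x*y) = st y * st x" using inv by (simp add: anti_involution_def)
lemma st_inj: "st x = st y \<longleftrightarrow> x = y" by (metis st_st)

lemma st_R_le: "R_le x y \<Longrightarrow> L_le (st x) (st y)"
  unfolding R_le_def L_le_def by auto
lemma st_L_le: "L_le x y \<Longrightarrow> R_le (st x) (st y)"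
  unfolding R_le_def L_le_def by auto
lemma st_J_le: "J_le x y \<Longrightarrow> J_le (st x) (st y)"
  unfolding J_le_iff
proof -
  assume "\<exists>s t. Some x = s * Some y * t"
  then obtain s t where "Some x = s * Some y * t" by blast
  then have "Some (st x) = map_option st t * Some (st y) * map_option st s"
    by (cases s; cases t) (auto simp: mult.assoc)
  then show "\<exists>s t. Some (st x) = s * Some (st y) * t" by blast
qed
lemma st_R_eq: "R_eq x y \<Longrightarrow> L_eq (st x) (st y)"
  unfolding R_eq_def L_eq_def using st_R_le by blast
lemma st_L_eq: "L_eq x y \<Longrightarrow> R_eq (st x) (st y)"
  unfolding R_eq_def L_eq_def using st_L_le by blast

end



lemma L_eq_right: "L_eq x y \<Longrightarrow> L_eq (x*z) (y*z)"
  unfolding L_eq_def using L_le_right by blast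
lemma R_eq_left: "R_eq x y \<Longrightarrow> R_eq (z*x) (z*y)"
  unfolding R_eq_def using R_le_left by blast
lemma H_class_iff: "g \<in> H_class e \<longleftrightarrow> R_eq g e \<and> L_eq g e"
  unfolding H_class_def H_eq_def using R_eq_sym L_eq_sym by blast

locale cs =
  fixes st :: "'a::{finite,semigroup_mult} \<Rightarrow> 'a"
    and \<alpha> :: "'a \<Rightarrow> 'a \<Rightarrow> 'r::comm_ring_1"
    and one :: "'a set \<Rightarrow> 'a"
    and \<Lambda>D :: "'a set \<Rightarrow> 'l set"
    and leD :: "'a set \<Rightarrow> 'l \<Rightarrow> 'l \<Rightarrow> bool"
    and MD :: "'a set \<Rightarrow> 'l \<Rightarrow> 'm set"
    and CD :: "'a set \<Rightarrow> 'l \<Rightarrow> 'm \<Rightarrow> 'm \<Rightarrow> 'a \<Rightarrow> 'r"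
    and u :: "'a set \<Rightarrow> 'a"
  assumes inv: "anti_involution st"
    and tw: "twisting \<alpha>"
    and asym: "\<forall>x y. \<alpha> x y = \<alpha> (st y) (st x)"
    and oneD: "\<forall>D\<in>D_classes. one D \<in> D \<and> one D * one D = one D \<and> st (one D) = one D"
    and unit: "\<forall>D\<in>D_classes. \<forall>x y. L_eq x (one D) \<and> R_eq y (one D) \<longrightarrow> (\<exists>v. \<alpha> x y * v = 1)"
    and cellG: "\<forall>D\<in>D_classes. cellular (H_class (one D)) \<alpha> st (\<Lambda>D D) (leD D) (MD D) (CD D)"
    and uD: "\<forall>D\<in>D_classes. \<forall>L\<in>L_classes_in D. u L \<in> L \<and> R_eq (u L) (one D)"
begin

lemma st_st'[simp]: "st (st x) = x" using st_st[OF inv] .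
lemma st_mult'[simp]: "st (x*y) = st y * st x" using st_mult[OF inv] .

context
  fixes D :: "'a set" assumes D: "D \<in> D_classes"
begin

lemma e_in: "one D \<in> D" using oneD D by blast
lemma e_idem: "one D * one D = one D" using oneD D by blast
lemma e_st: "st (one D) = one D" using oneD D by blast
lemma D_eq: "D = D_class (one D)"
  using D e_in D_class_mem unfolding D_classes_def by blast
lemma mem_D: "y \<in> D \<longleftrightarrow> Jeq (one D) y"
  using D_eq D_class_iff by metis
lemma st_D: "y \<in> D \<Longrightarrow> st y \<in> D"
  using mem_D st_J_le[OF inv] e_st by metis
lemma LD_iff: "L \<in> L_classes_in D \<longleftrightarrow> (\<exists>x\<in>D. L = L_class x)"
  by (auto simp: L_classes_in_def)

context
  fixes L :: "'a set" assumes L: "L \<in> L_classes_in D"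
begin
lemma uL_in: "u L \<in> L" using uD D L by blast
lemma uL_R: "R_eq (u L) (one D)" using uD D L by blast
lemma uL_D: "u L \<in> D" using uL_R mem_D R_eq_J by blast
lemma L_is: "L = L_class (u L)"
proof -
  obtain x where "L = L_class x" using L LD_iff by blast
  then show ?thesis using uL_in L_class_mem by blast
qed
lemma vL_L: "L_eq (st (u L)) (one D)"
proof -
  have "L_eq (st (u L)) (st (one D))" by (rule st_R_eq[OF inv uL_R])
  then show ?thesis by (simp only: e_st)
qed
lemma uL_e: "one D * u L = u L"
  using R_le_idem[OF e_idem] uL_R unfolding R_eq_def by blast
lemma vL_e: "st (u L) * one D = st (u L)"
  using L_le_idem[OF e_idem] vL_L unfolding L_eq_def by blast
lemma uL_w: "\<exists>w. one D = u L * w"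
  using R_le_idem_ex[OF e_idem] uL_R unfolding R_eq_def by blast
lemma vL_w: "\<exists>w. one D = w * st (u L)"
proof -
  obtain w where "one D = u L * w" using uL_w by blast
  then have "st (one D) = st w * st (u L)" by simp
  then show ?thesis by (simp only: e_st) blast
qed
end

lemma H_e:
  assumes "g \<in> H_class (one D)" shows "one D * g = g" "g * one D = g" "g \<in> D"
proof -
  have r: "R_eq g (one D)" and l: "L_eq g (one D)" using assms H_class_iff by auto
  show "one D * g = g" using r R_eq_def R_le_idem e_idem by blast
  show "g * one D = g" using l L_eq_def L_le_idem e_idem by blast
  show "g \<in> D" using r R_eq_J mem_D by blast
qed

lemma stab_L_D: "x \<in> D \<Longrightarrow> y \<in> D \<Longrightarrow> L_le x y \<Longrightarrow> L_eq x y"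
  unfolding L_eq_def using L_stable mem_D J_le_trans by blast
lemma stab_R_D: "x \<in> D \<Longrightarrow> y \<in> D \<Longrightarrow> R_le x y \<Longrightarrow> R_eq x y"
  unfolding R_eq_def using R_stable mem_D J_le_trans by blast

lemma block:
  assumes L: "L \<in> L_classes_in D" and K: "K \<in> L_classes_in D" and g: "g \<in> H_class (one D)"
  defines "z \<equiv> st (u L) * g * u K"
  shows "z \<in> D" "L_class z = K" "L_class (st z) = L"
    "\<exists>a b. g = a * z * b"
proof -
  obtain w where w: "one D = u K * w" using uL_w[OF K] by blast
  obtain w' where w': "one D = w' * st (u L)" using vL_w[OF L] by blast
  have "w' * z * w = (w' * st (u L)) * g * (u K * w)" unfolding z_def by (simp add: mult.assoc)
  also have "\<dots> = g" using H_e[OF g] by (simp add: w[symmetric] w'[symmetric])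
  finally have g_eq: "g = w' * z * w" by simp
  then show "\<exists>a b. g = a * z * b" by blast
  have "J_le (one D) g" using H_e(3)[OF g] mem_D by blast
  moreover have "J_le g z" using g_eq J_le_def by blast
  ultimately have "J_le (one D) z" using J_le_trans by blast
  moreover have "J_le z (one D)"
  proof -
    have "J_le z g" unfolding z_def J_le_def by blast
    moreover have "J_le g (one D)" using H_e(3)[OF g] mem_D by blast
    ultimately show ?thesis using J_le_trans by blast
  qed
  ultimately show zD: "z \<in> D" using mem_D by blast
  have "L_eq z (u K)" using stab_L_D[OF zD uL_D[OF K]] z_def L_le_mult by blast
  then show "L_class z = K" using L_is[OF K] L_class_eq by metis
  have "z = st (u L) * (g * u K)" by (simp add: z_def mult.assoc)
  then have "R_le z (st (u L))" using R_le_mult by metis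
  then have "R_eq z (st (u L))" using stab_R_D[OF zD st_D[OF uL_D[OF L]]] by blast
  then have "L_eq (st z) (u L)" using st_R_eq[OF inv] by fastforce
  then show "L_class (st z) = L" using L_is[OF L] L_class_eq by metis
qed

lemma block_inj:
  assumes L: "L \<in> L_classes_in D" and K: "K \<in> L_classes_in D"
    and g: "g \<in> H_class (one D)" and g': "g' \<in> H_class (one D)"
    and eq: "st (u L) * g * u K = st (u L) * g' * u K"
  shows "g = g'"
proof -
  obtain w where w: "one D = u K * w" using uL_w[OF K] by blast
  obtain w' where w': "one D = w' * st (u L)" using vL_w[OF L] by blast
  have "w' * (st (u L) * g * u K) * w = (w' * st (u L)) * g * (u K * w)" 
    "w' * (st (u L) * g' * u K) * w = (w' * st (u L)) * g' * (u K * w)" by (simp_all add: mult.assoc)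
  then have "g = w' * (st (u L) * g * u K) * w" "g' = w' * (st (u L) * g' * u K) * w"
    using H_e[OF g] H_e[OF g'] by (simp_all add: w[symmetric] w'[symmetric])
  then show ?thesis using eq by simp
qed

lemma L_class_D: "x \<in> D \<Longrightarrow> L_class x \<in> L_classes_in D"
  by (simp add: L_classes_in_def)

lemma block_surj:
  assumes y: "y \<in> D"
  shows "\<exists>g\<in>H_class (one D). y = st (u (L_class (st y))) * g * u (L_class y)"
proof -
  define L where "L = L_class (st y)"
  define K where "K = L_class y"
  have L: "L \<in> L_classes_in D" using L_def L_class_D st_D y by blast
  have K: "K \<in> L_classes_in D" using K_def L_class_D y by blast
  obtain w where w: "one D = u K * w" using uL_w[OF K] by blast
  obtain w' where w': "one D = w' * st (u L)" using vL_w[OF L] by blast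
  have "L_eq (u L) (st y)" using uL_in[OF L] unfolding L_def L_class_def by (simp add: L_eq_sym)
  then have yR: "R_eq y (st (u L))" using st_L_eq[OF inv] R_eq_sym by fastforce
  have yL: "L_eq y (u K)" using uL_in[OF K] unfolding K_def L_class_def by simp
  define g where "g = w' * y * w"
  have "(st (u L) * w') * st (u L) = st (u L)" by (simp add: mult.assoc w'[symmetric] vL_e[OF L])
  then have a: "(st (u L) * w') * y = y" using R_le_fix yR R_eq_def by blast
  have "u K * (w * u K) = u K" by (simp add: mult.assoc[symmetric] w[symmetric] uL_e[OF K])
  then have b: "y * (w * u K) = y" using L_le_fix yL L_eq_def by blast
  have "st (u L) * g * u K = (st (u L) * w') * y * (w * u K)" by (simp add: g_def mult.assoc)
  then have yeq: "y = st (u L) * g * u K" using a b by simp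
  have "R_le y (st (u L))" using yR R_eq_def by blast
  then have "R_le (w' * y) (one D)" using w' R_le_left[of y "st (u L)" w'] by simp
  then have "R_le g (one D)"
    unfolding g_def using R_le_trans R_le_mult by blast
  moreover have "L_le g (one D)"
  proof -
    have "L_le y (u K)" using yL L_eq_def by blast
    then have "L_le (y*w) (one D)" using L_le_right w by metis
    moreover have "g = w' * (y * w)" by (simp add: g_def mult.assoc)
    ultimately show ?thesis using L_le_mult L_le_trans by metis
  qed
  moreover have gD: "g \<in> D"
  proof -
    have "J_le y g" using yeq J_le_def by blast
    then have "J_le (one D) g" using y mem_D J_le_trans by blast
    moreover have "J_le g (one D)" using \<open>R_le g (one D)\<close> R_le_J by blast
    ultimately show ?thesis using mem_D by blast
  qed
  ultimately have "g \<in> H_class (one D)"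
    using H_class_iff stab_R_D stab_L_D e_in by blast
  then show ?thesis using yeq unfolding L_def K_def by blast
qed

lemma left_mult_D:
  assumes L: "L \<in> L_classes_in D" and xy: "x * st (u L) \<in> D"
  shows "\<exists>L'\<in>L_classes_in D. \<exists>h\<in>H_class (one D). x * st (u L) = st (u L') * h"
proof -
  define y where "y = x * st (u L)"
  have yD: "y \<in> D" using xy y_def by simp
  have "L_eq y (st (u L))" using stab_L_D[OF yD st_D[OF uL_D[OF L]]] y_def L_le_mult by blast
  then have yLe: "L_eq y (one D)" using vL_L[OF L] L_eq_trans by blast
  obtain g where g: "g \<in> H_class (one D)" and yeq: "y = st (u (L_class (st y))) * g * u (L_class y)"
    using block_surj[OF yD] by blast
  have K: "L_class y = L_class (one D)" using yLe L_class_eq by blast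
  have "u (L_class (one D)) \<in> H_class (one D)"
  proof -
    have LK: "L_class (one D) \<in> L_classes_in D" using L_class_D e_in by blast
    have "L_eq (u (L_class (one D))) (one D)"
      using uL_in[OF LK] unfolding L_class_def using L_eq_sym by blast
    then show ?thesis using uL_R[OF LK] H_class_iff by blast
  qed
  then have "g * u (L_class y) \<in> H_class (one D)"
  proof -
    let ?u = "u (L_class (one D))"
    have gr: "R_eq g (one D)" and gl: "L_eq g (one D)" using g H_class_iff by auto
    have ur: "R_eq ?u (one D)" and ul: "L_eq ?u (one D)"
      using \<open>?u \<in> H_class (one D)\<close> H_class_iff by auto
    have "R_eq (g * ?u) (g * one D)" using R_eq_left ur by blast
    then have "R_eq (g * ?u) (one D)" using H_e(2)[OF g] gr R_eq_trans by simp
    moreover have "L_eq (g * ?u) (one D * ?u)" using L_eq_right gl by blast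
    then have "L_eq (g * ?u) (one D)" using H_e(1)[OF \<open>?u \<in> H_class (one D)\<close>] ul L_eq_trans by simp
    ultimately show ?thesis unfolding K H_class_iff by blast
  qed
  moreover have "L_class (st y) \<in> L_classes_in D" using L_class_D st_D yD by blast
  moreover have "x * st (u L) = st (u (L_class (st y))) * (g * u (L_class y))"
    using yeq y_def by (simp add: mult.assoc)
  ultimately show ?thesis by blast
qed

end

end



abbreviation cv :: "('a::{finite,semigroup_mult} \<Rightarrow> 'a \<Rightarrow> 'r::comm_ring_1) \<Rightarrow> ('a \<Rightarrow> 'r) \<Rightarrow> ('a \<Rightarrow> 'r) \<Rightarrow> 'a \<Rightarrow> 'r"
  where "cv \<alpha> f g \<equiv> tsa_mult UNIV \<alpha> f g"

lemma tsa_delta_apply[simp]: "tsa_delta x z = (if z = x then 1 else 0)"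
  by (simp add: tsa_delta_def)

lemma cv_def: "cv \<alpha> f g z = (\<Sum>x\<in>UNIV. \<Sum>y\<in>UNIV. if x*y = z then \<alpha> x y * f x * g y else 0)"
  by (simp add: tsa_mult_def)

lemma delta_left: "cv \<alpha> (tsa_delta a) g z = (\<Sum>y\<in>UNIV. if a*y = z then \<alpha> a y * g y else 0)"
proof -
  have "cv \<alpha> (tsa_delta a) g z = (\<Sum>x\<in>UNIV. if x = a then (\<Sum>y\<in>UNIV. if a*y = z then \<alpha> a y * g y else 0) else 0)"
    unfolding cv_def by (rule sum.cong) (auto simp: tsa_delta_apply cong: if_cong)
  then show ?thesis by simp
qed

lemma delta_right: "cv \<alpha> f (tsa_delta b) z = (\<Sum>x\<in>UNIV. if x*b = z then \<alpha> x b * f x else 0)"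
proof -
  have "cv \<alpha> f (tsa_delta b) z = (\<Sum>x\<in>UNIV. \<Sum>y\<in>UNIV. if y = b then (if x*b = z then \<alpha> x b * f x else 0) else 0)"
    unfolding cv_def by (intro sum.cong refl) (auto simp: tsa_delta_apply cong: if_cong)
  then show ?thesis by simp
qed

lemma delta_delta: "cv \<alpha> (tsa_delta a) (tsa_delta b) z = \<alpha> a b * tsa_delta (a*b) z"
proof -
  have "cv \<alpha> (tsa_delta a) (tsa_delta b) z = (\<Sum>y\<in>UNIV. if y = b then (if a*b = z then \<alpha> a b else 0) else 0)"
    unfolding delta_left by (rule sum.cong) auto
  then show ?thesis by simp
qed

lemma expand: "(f::'a::finite \<Rightarrow> 'r::comm_ring_1) z = (\<Sum>x\<in>UNIV. f x * tsa_delta x z)"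
proof -
  have "(\<Sum>x\<in>UNIV. f x * tsa_delta x z) = (\<Sum>x\<in>UNIV. if z = x then f z else 0)"
    by (rule sum.cong) auto
  then show ?thesis by (simp add: eq_commute[of z])
qed

lemma cv_lin_left:
  "cv \<alpha> (\<lambda>z. \<Sum>i\<in>I. c i * F i z) g z = (\<Sum>i\<in>I. c i * cv \<alpha> (F i) g z)"
proof -
  have "cv \<alpha> (\<lambda>z. \<Sum>i\<in>I. c i * F i z) g z
      = (\<Sum>x\<in>UNIV. \<Sum>y\<in>UNIV. \<Sum>i\<in>I. if x*y = z then c i * (\<alpha> x y * F i x * g y) else 0)"
    unfolding cv_def by (intro sum.cong refl) (auto simp: sum_distrib_left sum_distrib_right algebra_simps)
  also have "\<dots> = (\<Sum>i\<in>I. \<Sum>x\<in>UNIV. \<Sum>y\<in>UNIV. if x*y = z then c i * (\<alpha> x y * F i x * g y) else 0)"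
    by (simp add: sum.swap[of _ I])
  also have "\<dots> = (\<Sum>i\<in>I. c i * cv \<alpha> (F i) g z)"
    unfolding cv_def by (intro sum.cong refl) (auto simp: sum_distrib_left if_distrib cong: if_cong)
  finally show ?thesis .
qed

lemma cv_lin_right:
  "cv \<alpha> f (\<lambda>z. \<Sum>i\<in>I. c i * F i z) z = (\<Sum>i\<in>I. c i * cv \<alpha> f (F i) z)"
proof -
  have "cv \<alpha> f (\<lambda>z. \<Sum>i\<in>I. c i * F i z) z
      = (\<Sum>x\<in>UNIV. \<Sum>y\<in>UNIV. \<Sum>i\<in>I. if x*y = z then c i * (\<alpha> x y * f x * F i y) else 0)"
    unfolding cv_def by (intro sum.cong refl) (auto simp: sum_distrib_left sum_distrib_right algebra_simps)
  also have "\<dots> = (\<Sum>i\<in>I. \<Sum>x\<in>UNIV. \<Sum>y\<in>UNIV. if x*y = z then c i * (\<alpha> x y * f x * F i y) else 0)"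
    by (simp add: sum.swap[of _ I])
  also have "\<dots> = (\<Sum>i\<in>I. c i * cv \<alpha> f (F i) z)"
    unfolding cv_def by (intro sum.cong refl) (auto simp: sum_distrib_left if_distrib cong: if_cong)
  finally show ?thesis .
qed

lemma cv_smult_left: "cv \<alpha> (\<lambda>z. k * f z) g z = k * cv \<alpha> f g z"
  using cv_lin_left[where I="{()}" and c="\<lambda>_. k" and F="\<lambda>_. f"] by simp
lemma cv_smult_right: "cv \<alpha> f (\<lambda>z. k * g z) z = k * cv \<alpha> f g z"
  using cv_lin_right[where I="{()}" and c="\<lambda>_. k" and F="\<lambda>_. g"] by simp


lemma cv_expand_left: "cv \<alpha> f g z = (\<Sum>x\<in>UNIV. f x * cv \<alpha> (tsa_delta x) g z)"
proof -
  have "f = (\<lambda>z. \<Sum>x\<in>UNIV. f x * tsa_delta x z)" using expand by (rule ext)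
  then have "cv \<alpha> f g z = cv \<alpha> (\<lambda>z. \<Sum>x\<in>UNIV. f x * tsa_delta x z) g z" by simp
  then show ?thesis by (simp only: cv_lin_left)
qed

lemma cv_expand_right: "cv \<alpha> f g z = (\<Sum>y\<in>UNIV. g y * cv \<alpha> f (tsa_delta y) z)"
proof -
  have "g = (\<lambda>z. \<Sum>x\<in>UNIV. g x * tsa_delta x z)" using expand by (rule ext)
  then have "cv \<alpha> f g z = cv \<alpha> f (\<lambda>z. \<Sum>x\<in>UNIV. g x * tsa_delta x z) z" by simp
  then show ?thesis by (simp only: cv_lin_right)
qed

lemma cv_expand_left_fun: "cv \<alpha> f g = (\<lambda>z. \<Sum>x\<in>UNIV. f x * cv \<alpha> (tsa_delta x) g z)"
  using cv_expand_left by (rule ext)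
lemma cv_expand_right_fun: "cv \<alpha> f g = (\<lambda>z. \<Sum>y\<in>UNIV. g y * cv \<alpha> f (tsa_delta y) z)"
  using cv_expand_right by (rule ext)
lemma dd_fun: "cv \<alpha> (tsa_delta a) (tsa_delta b) = (\<lambda>z. \<alpha> a b * tsa_delta (a*b) z)"
  using delta_delta by (rule ext)

lemma cv_assoc:
  assumes tw: "twisting \<alpha>"
  shows "cv \<alpha> (cv \<alpha> f g) h z = cv \<alpha> f (cv \<alpha> g h) z"
proof -
  have L: "cv \<alpha> (cv \<alpha> f g) h z = (\<Sum>x\<in>UNIV. f x * (\<Sum>y\<in>UNIV. g y * (\<alpha> x y *
      (\<Sum>w\<in>UNIV. h w * (\<alpha> (x*y) w * tsa_delta (x*y*w) z)))))"
    apply (subst cv_expand_left_fun)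
    apply (simp only: cv_lin_left)
    apply (subst cv_expand_right_fun)
    apply (simp only: cv_lin_left dd_fun cv_smult_left)
    apply (subst cv_expand_right)
    apply (simp only: delta_delta)
    done
  have R: "cv \<alpha> f (cv \<alpha> g h) z = (\<Sum>x\<in>UNIV. f x * (\<Sum>y\<in>UNIV. g y *
      (\<Sum>w\<in>UNIV. h w * (\<alpha> y w * (\<alpha> x (y*w) * tsa_delta (x*(y*w)) z)))))"
    apply (subst cv_expand_left)
    apply (subst (2) cv_expand_left_fun)
    apply (simp only: cv_lin_right)
    apply (subst (2) cv_expand_right_fun)
    apply (simp only: cv_lin_right dd_fun cv_smult_right delta_delta)
    done
  have t: "\<alpha> x y * \<alpha> (x*y) w = \<alpha> x (y*w) * \<alpha> y w" for x y w
    using tw by (simp add: twisting_def)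
  have "\<alpha> x y * (h w * (\<alpha> (x*y) w * d)) = h w * (\<alpha> y w * (\<alpha> x (y*w) * d))" for x y w d
    using t[of x y w] by (simp add: mult_ac)
  then show ?thesis unfolding L R by (simp add: sum_distrib_left mult.assoc)
qed

lemma cv_assoc_fun:
  assumes tw: "twisting \<alpha>"
  shows "cv \<alpha> (cv \<alpha> f g) h = cv \<alpha> f (cv \<alpha> g h)"
  using cv_assoc[OF tw] by (rule ext)

lemma phi_formula:
  "cv \<alpha> (cv \<alpha> (tsa_delta v) c) (tsa_delta w) z
    = (\<Sum>y\<in>UNIV. if v*y*w = z then \<alpha> v y * \<alpha> (v*y) w * c y else 0)"
proof -
  have "cv \<alpha> (cv \<alpha> (tsa_delta v) c) (tsa_delta w) z
      = (\<Sum>y\<in>UNIV. c y * (\<alpha> v y * (\<alpha> (v*y) w * tsa_delta (v*y*w) z)))"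
    apply (subst cv_expand_right_fun)
    apply (simp only: cv_lin_left dd_fun cv_smult_left delta_delta)
    done
  also have "\<dots> = (\<Sum>y\<in>UNIV. if v*y*w = z then \<alpha> v y * \<alpha> (v*y) w * c y else 0)"
    by (rule sum.cong) (auto simp: mult_ac)
  finally show ?thesis .
qed

lemma tsa_carrier_UNIV[simp]: "tsa_carrier UNIV = UNIV"
  by (simp add: tsa_carrier_def)

lemma tsa_mult_G:
  fixes f g :: "'a::{finite,semigroup_mult} \<Rightarrow> 'r::comm_ring_1"
  assumes f: "f \<in> tsa_carrier G" and g: "g \<in> tsa_carrier G"
  shows "tsa_mult G \<alpha> f g = cv \<alpha> f g"
proof
  fix z
  have "(\<Sum>x\<in>UNIV. \<Sum>y\<in>UNIV. if x*y = z then \<alpha> x y * f x * g y else 0)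
      = (\<Sum>x\<in>G. \<Sum>y\<in>UNIV. if x*y = z then \<alpha> x y * f x * g y else 0)"
    by (rule sum.mono_neutral_right) (use f in \<open>auto simp: tsa_carrier_def intro!: sum.neutral\<close>)
  also have "\<dots> = (\<Sum>x\<in>G. \<Sum>y\<in>G. if x*y = z then \<alpha> x y * f x * g y else 0)"
    by (intro sum.cong refl sum.mono_neutral_right) (use g in \<open>auto simp: tsa_carrier_def\<close>)
  finally show "tsa_mult G \<alpha> f g z = cv \<alpha> f g z" by (simp add: tsa_mult_def)
qed

context
  fixes st :: "'a::{finite,semigroup_mult} \<Rightarrow> 'a"
  assumes inv: "anti_involution st"
begin

lemma sum_st: "(\<Sum>x\<in>UNIV. F x) = (\<Sum>x\<in>UNIV. F (st x))"
proof -
  have "inj st" by (metis injI st_st[OF inv])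
  moreover have "surj st" by (metis surjI st_st[OF inv])
  ultimately show ?thesis using sum.reindex[of st UNIV F] by simp
qed

lemma star_delta: "star_lin st (tsa_delta a) = tsa_delta (st a)"
proof
  fix z
  have "st z = a \<longleftrightarrow> z = st a" using st_st[OF inv] by metis
  then show "star_lin st (tsa_delta a) z = tsa_delta (st a) z" by (simp add: star_lin_def)
qed

lemma star_cv:
  assumes asym: "\<forall>x y. \<alpha> x y = \<alpha> (st y) (st x)"
  shows "star_lin st (cv \<alpha> f g) = cv \<alpha> (star_lin st g) (star_lin st f)"
proof
  fix z
  have "star_lin st (cv \<alpha> f g) z = (\<Sum>x\<in>UNIV. \<Sum>y\<in>UNIV. if x*y = st z then \<alpha> x y * f x * g y else 0)"
    by (simp add: star_lin_def cv_def)
  also have "\<dots> = (\<Sum>x\<in>UNIV. \<Sum>y\<in>UNIV. if st x*st y = st z then \<alpha> (st x) (st y) * f (st x) * g (st y) else 0)"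
    by (subst sum_st) (subst (2) sum_st, rule refl)
  also have "\<dots> = (\<Sum>y\<in>UNIV. \<Sum>x\<in>UNIV. if st x*st y = st z then \<alpha> (st x) (st y) * f (st x) * g (st y) else 0)"
    by (rule sum.swap)
  also have "\<dots> = (\<Sum>y\<in>UNIV. \<Sum>x\<in>UNIV. if y*x = z then \<alpha> y x * g (st y) * f (st x) else 0)"
  proof (intro sum.cong refl)
    fix x y
    have "st x * st y = st z \<longleftrightarrow> y * x = z" using st_inj[OF inv, of "y*x" z] by (simp add: st_mult[OF inv])
    moreover have "\<alpha> (st x) (st y) = \<alpha> y x" using asym st_st[OF inv] by metis
    ultimately show "(if st x*st y = st z then \<alpha> (st x) (st y) * f (st x) * g (st y) else 0) =
        (if y*x = z then \<alpha> y x * g (st y) * f (st x) else 0)" by (simp add: mult_ac)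
  qed
  also have "\<dots> = cv \<alpha> (star_lin st g) (star_lin st f) z"
    by (simp add: star_lin_def cv_def)
  finally show "star_lin st (cv \<alpha> f g) z = cv \<alpha> (star_lin st g) (star_lin st f) z" .
qed

end



lemma cell_parts1:
  assumes "cellular GG \<alpha> st \<Lambda> le M C"
  shows "finite \<Lambda>"
  using assms unfolding cellular_def by (elim conjE) assumption

lemma cell_parts2:
  assumes "cellular GG \<alpha> st \<Lambda> le M C"
  shows "\<forall>l\<in>\<Lambda>. le l l"
  using assms unfolding cellular_def by (elim conjE) assumption

lemma cell_parts3:
  assumes "cellular GG \<alpha> st \<Lambda> le M C"
  shows "\<forall>a\<in>\<Lambda>. \<forall>b\<in>\<Lambda>. le a b \<and> le b a \<longrightarrow> a = b"
  using assms unfolding cellular_def by (elim conjE) assumption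

lemma cell_parts4:
  assumes "cellular GG \<alpha> st \<Lambda> le M C"
  shows "\<forall>a\<in>\<Lambda>. \<forall>b\<in>\<Lambda>. \<forall>c\<in>\<Lambda>. le a b \<and> le b c \<longrightarrow> le a c"
  using assms unfolding cellular_def by (elim conjE) assumption

lemma cell_parts5:
  assumes "cellular GG \<alpha> st \<Lambda> le M C"
  shows "\<forall>l\<in>\<Lambda>. finite (M l)"
  using assms unfolding cellular_def by (elim conjE) assumption

lemma cell_parts6:
  assumes "cellular GG \<alpha> st \<Lambda> le M C"
  shows "\<forall>l\<in>\<Lambda>. \<forall>s\<in>M l. \<forall>t\<in>M l. C l s t \<in> tsa_carrier GG"
  using assms unfolding cellular_def by (elim conjE) assumption

lemma cell_parts7:
  assumes "cellular GG \<alpha> st \<Lambda> le M C"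
  shows "\<forall>f\<in>tsa_carrier GG. \<exists>!c. (\<forall>i. i \<notin> cell_index \<Lambda> M \<longrightarrow> c i = 0) \<and>
         f = (\<lambda>z. \<Sum>i\<in>cell_index \<Lambda> M. c i * C (fst i) (fst (snd i)) (snd (snd i)) z)"
  using assms unfolding cellular_def by (elim conjE) assumption

lemma cell_parts8:
  assumes "cellular GG \<alpha> st \<Lambda> le M C"
  shows "\<forall>l\<in>\<Lambda>. \<forall>s\<in>M l. \<forall>t\<in>M l. star_lin st (C l s t) = C l t s"
  using assms unfolding cellular_def by (elim conjE) assumption

lemma cell_parts9:
  assumes "cellular GG \<alpha> st \<Lambda> le M C"
  shows "\<forall>l\<in>\<Lambda>. \<forall>s\<in>M l. \<forall>a\<in>tsa_carrier GG. \<exists>r. \<forall>t\<in>M l.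
         (\<lambda>z. tsa_mult GG \<alpha> a (C l s t) z - (\<Sum>s'\<in>M l. r s' * C l s' t z))
           \<in> cell_lower \<Lambda> le M C l"
  using assms unfolding cellular_def by (elim conjE) assumption

lemmas cell_parts = cell_parts1 cell_parts2 cell_parts3 cell_parts4 cell_parts5 cell_parts6 cell_parts7 cell_parts8 cell_parts9

context cs begin

definition Lam where "Lam = {(D, l). D \<in> D_classes \<and> l \<in> \<Lambda>D D}"
definition leO where "leO = (\<lambda>(D1, l1) (D2, l2). D_less D1 D2 \<or> (D1 = D2 \<and> leD D1 l1 l2))"
definition MO where "MO = (\<lambda>(D, l). L_classes_in D \<times> MD D l)"
definition CO where "CO = (\<lambda>(D, l) (L, s) (K, t).
              tsa_mult UNIV \<alpha> (tsa_mult UNIV \<alpha> (tsa_delta (st (u L))) (CD D l s t)) (tsa_delta (u K)))"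

abbreviation Phi where "Phi L K c \<equiv> cv \<alpha> (cv \<alpha> (tsa_delta (st (u L))) c) (tsa_delta (u K))"

lemma CO_apply[simp]: "CO (D, l) (L, s) (K, t) = Phi L K (CD D l s t)"
  by (simp add: CO_def)
lemma MO_apply[simp]: "MO (D, l) = L_classes_in D \<times> MD D l" by (simp add: MO_def)
lemma leO_apply[simp]: "leO (D1, l1) (D2, l2) \<longleftrightarrow> D_less D1 D2 \<or> (D1 = D2 \<and> leD D1 l1 l2)"
  by (simp add: leO_def)
lemma Lam_iff[simp]: "(D, l) \<in> Lam \<longleftrightarrow> D \<in> D_classes \<and> l \<in> \<Lambda>D D" by (simp add: Lam_def)

abbreviation G where "G D \<equiv> H_class (one D)"

context fixes D :: "'a set" assumes D: "D \<in> D_classes" begin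
lemma cG: "cellular (G D) \<alpha> st (\<Lambda>D D) (leD D) (MD D) (CD D)" using cellG D by blast
lemma G_fin: "finite (\<Lambda>D D)" using cell_parts(1)[OF cG] .
lemma G_refl: "l \<in> \<Lambda>D D \<Longrightarrow> leD D l l" using cell_parts(2)[OF cG] by blast
lemma G_antisym: "a \<in> \<Lambda>D D \<Longrightarrow> b \<in> \<Lambda>D D \<Longrightarrow> leD D a b \<Longrightarrow> leD D b a \<Longrightarrow> a = b"
  using cell_parts(3)[OF cG] by blast
lemma G_trans: "a \<in> \<Lambda>D D \<Longrightarrow> b \<in> \<Lambda>D D \<Longrightarrow> c \<in> \<Lambda>D D \<Longrightarrow> leD D a b \<Longrightarrow> leD D b c \<Longrightarrow> leD D a c"
  using cell_parts(4)[OF cG] by blast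
lemma G_finM: "l \<in> \<Lambda>D D \<Longrightarrow> finite (MD D l)" using cell_parts(5)[OF cG] by blast
lemma G_carr: "l \<in> \<Lambda>D D \<Longrightarrow> s \<in> MD D l \<Longrightarrow> t \<in> MD D l \<Longrightarrow> CD D l s t \<in> tsa_carrier (G D)"
  using cell_parts(6)[OF cG] by blast
lemma G_basis: "f \<in> tsa_carrier (G D) \<Longrightarrow> \<exists>!c. (\<forall>i. i \<notin> cell_index (\<Lambda>D D) (MD D) \<longrightarrow> c i = 0) \<and>
         f = (\<lambda>z. \<Sum>i\<in>cell_index (\<Lambda>D D) (MD D). c i * CD D (fst i) (fst (snd i)) (snd (snd i)) z)"
  using cell_parts(7)[OF cG] by blast
lemma G_star: "l \<in> \<Lambda>D D \<Longrightarrow> s \<in> MD D l \<Longrightarrow> t \<in> MD D l \<Longrightarrow> star_lin st (CD D l s t) = CD D l t s"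
  using cell_parts(8)[OF cG] by blast
lemma G_C3: "l \<in> \<Lambda>D D \<Longrightarrow> s \<in> MD D l \<Longrightarrow> a \<in> tsa_carrier (G D) \<Longrightarrow> \<exists>r. \<forall>t\<in>MD D l.
         (\<lambda>z. tsa_mult (G D) \<alpha> a (CD D l s t) z - (\<Sum>s'\<in>MD D l. r s' * CD D l s' t z))
           \<in> cell_lower (\<Lambda>D D) (leD D) (MD D) (CD D) l"
  using cell_parts(9)[OF cG] by blast
lemma LD_fin: "finite (L_classes_in D)" by (simp add: L_classes_in_def)
end

lemma D_classes_fin: "finite (D_classes :: 'a set set)" by (simp add: D_classes_def)

lemma Dle_iff:
  fixes D1 D2 :: "'a set"
  assumes "D1 \<in> D_classes" "D2 \<in> D_classes"
  shows "D_le D1 D2 \<longleftrightarrow> J_le (one D1) (one D2)"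
  using D_eq[OF assms(1)] D_eq[OF assms(2)] D_le_iff by metis
lemma Dle_antisym:
  fixes D1 D2 :: "'a set"
  assumes a: "D1 \<in> D_classes" "D2 \<in> D_classes" "D_le D1 D2" "D_le D2 D1"
  shows "D1 = D2"
proof -
  have "Jeq (one D1) (one D2)" using Dle_iff a by blast
  then have "D_class (one D1) = D_class (one D2)" using D_class_eq_iff by blast
  then show ?thesis using D_eq a by metis
qed
lemma Dle_trans:
  fixes D1 D2 D3 :: "'a set"
  assumes "D1 \<in> D_classes" "D2 \<in> D_classes" "D3 \<in> D_classes" "D_le D1 D2" "D_le D2 D3"
  shows "D_le D1 D3"
  using assms Dle_iff J_le_trans by metis
lemma Dless_trans:
  fixes D1 D2 D3 :: "'a set"
  assumes "D1 \<in> D_classes" "D2 \<in> D_classes" "D3 \<in> D_classes" "D_less D1 D2" "D_less D2 D3"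
  shows "D_less D1 D3"
  using assms unfolding D_less_def using Dle_trans Dle_antisym by blast

lemma Lam_fin: "finite Lam"
proof -
  have "Lam = (SIGMA D:D_classes. \<Lambda>D D)" by (auto simp: Lam_def)
  then show ?thesis using D_classes_fin G_fin by simp
qed

lemma order_refl: "\<forall>l\<in>Lam. leO l l"
proof
  fix l assume "l \<in> Lam" then obtain D x where "l = (D,x)" "D \<in> D_classes" "x \<in> \<Lambda>D D" by (cases l) auto
  then show "leO l l" using G_refl by simp
qed
lemma order_antisym: "\<forall>a\<in>Lam. \<forall>b\<in>Lam. leO a b \<and> leO b a \<longrightarrow> a = b"
proof (intro ballI impI)
  fix a b assume ab: "a \<in> Lam" "b \<in> Lam" and h: "leO a b \<and> leO b a"
  obtain D1 l1 D2 l2 where e: "a = (D1,l1)" "b = (D2,l2)" by (cases a, cases b) auto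
  have D: "D1 \<in> D_classes" "D2 \<in> D_classes" "l1 \<in> \<Lambda>D D1" "l2 \<in> \<Lambda>D D2" using ab e by auto
  have h1: "D_less D1 D2 \<or> (D1 = D2 \<and> leD D1 l1 l2)" and h2: "D_less D2 D1 \<or> (D2 = D1 \<and> leD D2 l2 l1)"
    using h e by auto
  have "D1 = D2"
  proof (rule ccontr)
    assume "D1 \<noteq> D2"
    then have "D_le D1 D2" "D_le D2 D1" using h1 h2 D_less_def by auto
    then show False using Dle_antisym D \<open>D1 \<noteq> D2\<close> by blast
  qed
  then have "leD D1 l1 l2" "leD D1 l2 l1" using h1 h2 D_less_def by auto
  then have "l1 = l2" using G_antisym D \<open>D1 = D2\<close> by blast
  then show "a = b" using e \<open>D1 = D2\<close> by simp
qed
lemma order_trans: "\<forall>a\<in>Lam. \<forall>b\<in>Lam. \<forall>c\<in>Lam. leO a b \<and> leO b c \<longrightarrow> leO a c"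
proof (intro ballI impI)
  fix a b c assume abc: "a \<in> Lam" "b \<in> Lam" "c \<in> Lam" and h: "leO a b \<and> leO b c"
  obtain D1 l1 D2 l2 D3 l3 where e: "a = (D1,l1)" "b = (D2,l2)" "c = (D3,l3)" by (cases a, cases b, cases c) auto
  have D: "D1 \<in> D_classes" "D2 \<in> D_classes" "D3 \<in> D_classes"
    "l1 \<in> \<Lambda>D D1" "l2 \<in> \<Lambda>D D2" "l3 \<in> \<Lambda>D D3" using abc e by auto
  have h1: "D_less D1 D2 \<or> (D1 = D2 \<and> leD D1 l1 l2)" and h2: "D_less D2 D3 \<or> (D2 = D3 \<and> leD D2 l2 l3)"
    using h e by auto
  have "D_less D1 D3 \<or> (D1 = D3 \<and> leD D1 l1 l3)"
  proof (cases "D_less D1 D2")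
    case True
    then show ?thesis using h2 Dless_trans D by blast
  next
    case False
    then have "D1 = D2" "leD D1 l1 l2" using h1 by auto
    then show ?thesis using h2 G_trans D by blast
  qed
  then show "leO a c" using e by simp
qed
lemma M_fin: "\<forall>l\<in>Lam. finite (MO l)"
proof
  fix l assume "l \<in> Lam" then obtain D x where "l = (D,x)" "D \<in> D_classes" "x \<in> \<Lambda>D D" by (cases l) auto
  then show "finite (MO l)" using G_finM LD_fin by simp
qed

end


lemma cell_index_fin: "finite \<Lambda> \<Longrightarrow> \<forall>l\<in>\<Lambda>. finite (M l) \<Longrightarrow> finite (cell_index \<Lambda> M)"
proof -
  assume a: "finite \<Lambda>" "\<forall>l\<in>\<Lambda>. finite (M l)"
  have "cell_index \<Lambda> M = (SIGMA l:\<Lambda>. M l \<times> M l)" by (auto simp: cell_index_def)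
  then show ?thesis using a by auto
qed

lemma cell_index_iff: "i \<in> cell_index \<Lambda> M \<longleftrightarrow> fst i \<in> \<Lambda> \<and> fst (snd i) \<in> M (fst i) \<and> snd (snd i) \<in> M (fst i)"
  by (cases i) (auto simp: cell_index_def)

context cs begin

abbreviation I where "I \<equiv> cell_index Lam MO"
abbreviation CI where "CI i \<equiv> CO (fst i) (fst (snd i)) (snd (snd i))"

lemma I_fin: "finite I" using cell_index_fin Lam_fin M_fin by blast

lemma I_iff: "((D,l),(L,s),(K,t)) \<in> I \<longleftrightarrow> D \<in> D_classes \<and> l \<in> \<Lambda>D D \<and> L \<in> L_classes_in D \<and> s \<in> MD D l \<and> K \<in> L_classes_in D \<and> t \<in> MD D l"
  by (simp add: cell_index_def)

lemma D_of_mem: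
  fixes D :: "'a set"
  assumes D: "D \<in> D_classes" and z: "z \<in> D" shows "D = D_class z"
proof -
  have e: "D = D_class (one D)" by (rule D_eq[OF D])
  then have "z \<in> D_class (one D)" using z by simp
  then have "D_class (one D) = D_class z" by (rule D_class_mem)
  then show ?thesis using e by simp
qed

lemma D_class_in: "D_class z \<in> D_classes" by (simp add: D_classes_def)

definition beta where "beta L K g = \<alpha> (st (u L)) g * \<alpha> (st (u L) * g) (u K)"

context fixes D :: "'a set" assumes D: "D \<in> D_classes" begin

lemma block_id:
  assumes L: "L \<in> L_classes_in D" and K: "K \<in> L_classes_in D" and g: "g \<in> G D"
    and D': "D' \<in> D_classes" and L': "L' \<in> L_classes_in D'" and K': "K' \<in> L_classes_in D'" and g': "g' \<in> G D'"
    and eq: "st (u L) * g * u K = st (u L') * g' * u K'"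
  shows "D' = D \<and> L' = L \<and> K' = K \<and> g' = g"
proof -
  let ?z = "st (u L) * g * u K"
  have "?z \<in> D" using block(1)[OF D L K g] .
  moreover have "?z \<in> D'" using block(1)[OF D' L' K' g'] eq by simp
  ultimately have DD: "D' = D" using D_of_mem D D' by metis
  have "L' = L" using block(3)[OF D L K g] block(3)[OF D' L' K' g'] eq by simp
  moreover have "K' = K" using block(2)[OF D L K g] block(2)[OF D' L' K' g'] eq by simp
  ultimately show ?thesis using DD block_inj[OF D L K g] g' eq by simp
qed

lemma beta_unit:
  assumes L: "L \<in> L_classes_in D" and K: "K \<in> L_classes_in D" and g: "g \<in> G D"
  shows "\<exists>b. beta L K g * b = 1"
proof -
  have gR: "R_eq g (one D)" and gL: "L_eq g (one D)" using g H_class_iff by auto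
  obtain b1 where b1: "\<alpha> (st (u L)) g * b1 = 1" using unit D vL_L[OF D L] gR by blast
  have "L_eq (st (u L) * g) (one D * g)" using L_eq_right vL_L[OF D L] by blast
  then have "L_eq (st (u L) * g) (one D)" using H_e(1)[OF D g] gL L_eq_trans by simp
  then obtain b2 where b2: "\<alpha> (st (u L) * g) (u K) * b2 = 1" using unit D uL_R[OF D K] by blast
  have "beta L K g * (b1 * b2) = (\<alpha> (st (u L)) g * b1) * (\<alpha> (st (u L) * g) (u K) * b2)"
    by (simp add: beta_def mult_ac)
  then show ?thesis using b1 b2 by auto
qed

lemma Phi_nz:
  assumes c: "c \<in> tsa_carrier (G D)" and nz: "Phi L K c z \<noteq> 0"
  shows "\<exists>g\<in>G D. z = st (u L) * g * u K"
proof -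
  have "(\<Sum>y\<in>UNIV. if st (u L)*y*u K = z then \<alpha> (st (u L)) y * \<alpha> (st (u L)*y) (u K) * c y else 0) \<noteq> 0"
    using nz[unfolded phi_formula] .
  then obtain y where "(if st (u L)*y*u K = z then \<alpha> (st (u L)) y * \<alpha> (st (u L)*y) (u K) * c y else 0) \<noteq> 0"
    using sum.not_neutral_contains_not_neutral by blast
  then have "st (u L)*y*u K = z" "c y \<noteq> 0" by (auto split: if_splits)
  moreover have "y \<in> G D" using c \<open>c y \<noteq> 0\<close> by (auto simp: tsa_carrier_def)
  ultimately show ?thesis by blast
qed

lemma Phi_at:
  assumes L: "L \<in> L_classes_in D" and K: "K \<in> L_classes_in D" and g: "g \<in> G D"
    and c: "c \<in> tsa_carrier (G D)"
  shows "Phi L K c (st (u L) * g * u K) = beta L K g * c g"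
proof -
  have "Phi L K c (st (u L) * g * u K) = (\<Sum>y\<in>UNIV. if st (u L)*y*u K = st (u L) * g * u K
      then \<alpha> (st (u L)) y * \<alpha> (st (u L)*y) (u K) * c y else 0)"
    by (rule phi_formula)
  also have "\<dots> = (\<Sum>y\<in>UNIV. if y = g then beta L K g * c g else 0)"
  proof (rule sum.cong)
    fix y
    show "(if st (u L)*y*u K = st (u L) * g * u K
      then \<alpha> (st (u L)) y * \<alpha> (st (u L)*y) (u K) * c y else 0) = (if y = g then beta L K g * c g else 0)"
    proof (cases "y \<in> G D")
      case True
      then have "st (u L)*y*u K = st (u L) * g * u K \<longleftrightarrow> y = g" using block_inj[OF D L K True g] by blast
      then show ?thesis by (simp add: beta_def)
    next
      case False
      then have "c y = 0" "y \<noteq> g" using c g by (auto simp: tsa_carrier_def)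
      then show ?thesis by simp
    qed
  qed simp
  also have "\<dots> = beta L K g * c g" by simp
  finally show ?thesis .
qed

end

lemma Phi_delta: "Phi L K (tsa_delta g) = (\<lambda>z. beta L K g * tsa_delta (st (u L) * g * u K) z)"
proof
  fix z
  have "Phi L K (tsa_delta g) z = (\<Sum>y\<in>UNIV. if st (u L)*y*u K = z then \<alpha> (st (u L)) y * \<alpha> (st (u L)*y) (u K) * tsa_delta g y else 0)"
    by (rule phi_formula)
  also have "\<dots> = (\<Sum>y\<in>UNIV. if y = g then beta L K g * tsa_delta (st (u L) * g * u K) z else 0)"
    by (rule sum.cong) (auto simp: beta_def)
  finally show "Phi L K (tsa_delta g) z = beta L K g * tsa_delta (st (u L) * g * u K) z" by simp
qed

lemma Phi_lin: "Phi L K (\<lambda>z. \<Sum>i\<in>A. c i * F i z) z = (\<Sum>i\<in>A. c i * Phi L K (F i) z)"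
proof -
  have "cv \<alpha> (tsa_delta (st (u L))) (\<lambda>z. \<Sum>i\<in>A. c i * F i z)
      = (\<lambda>p. \<Sum>i\<in>A. c i * cv \<alpha> (tsa_delta (st (u L))) (F i) p)"
    by (rule ext) (rule cv_lin_right)
  then show ?thesis by (simp add: cv_lin_left)
qed

lemma Phi_smult: "Phi L K (\<lambda>z. k * f z) z = k * Phi L K f z"
  using Phi_lin[where A="{()}" and c="\<lambda>_. k" and F="\<lambda>_. f"] by simp

end


context cs begin

lemma delta_exp:
  "\<exists>c. (\<forall>i. i \<notin> I \<longrightarrow> c i = 0) \<and> (\<forall>i. c i \<noteq> 0 \<longrightarrow> fst (fst i) = D_class y)
      \<and> tsa_delta y = (\<lambda>z. \<Sum>i\<in>I. c i * CI i z)"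
proof -
  define D where "D = D_class y"
  have D: "D \<in> D_classes" using D_class_in D_def by simp
  have yD: "y \<in> D" using D_class_self D_def by simp
  define L where "L = L_class (st y)"
  define K where "K = L_class y"
  obtain g where g: "g \<in> G D" and yeq: "y = st (u L) * g * u K"
    using block_surj[OF D yD] unfolding L_def K_def by blast
  have L: "L \<in> L_classes_in D" using L_class_D[OF D] st_D[OF D yD] L_def by simp
  have K: "K \<in> L_classes_in D" using L_class_D[OF D] yD K_def by simp
  obtain b where b: "beta L K g * b = 1" using beta_unit[OF D L K g] by blast
  let ?IG = "cell_index (\<Lambda>D D) (MD D)"
  have dg: "tsa_delta g \<in> tsa_carrier (G D)" using g by (auto simp: tsa_carrier_def)
  obtain d where d0: "\<forall>j. j \<notin> ?IG \<longrightarrow> d j = 0"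
    and dexp: "tsa_delta g = (\<lambda>z. \<Sum>j\<in>?IG. d j * CD D (fst j) (fst (snd j)) (snd (snd j)) z)"
    using G_basis[OF D dg] by blast
  define emb where "emb j = ((D, fst j), (L, fst (snd j)), (K, snd (snd j)))" for j :: "'l \<times> 'm \<times> 'm"
  define c where "c i = (if fst (fst i) = D \<and> fst (fst (snd i)) = L \<and> fst (snd (snd i)) = K
      then b * d (snd (fst i), snd (fst (snd i)), snd (snd (snd i))) else 0)"
    for i :: "('a set \<times> 'l) \<times> ('a set \<times> 'm) \<times> ('a set \<times> 'm)"
  have c_emb: "c (emb j) = b * d j" for j by (simp add: c_def emb_def)
  have embI: "emb j \<in> I" if "j \<in> ?IG" for j
    using that D L K by (cases j) (auto simp: emb_def cell_index_def)
  have inj: "inj emb" by (rule injI) (auto simp: emb_def prod_eq_iff)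
  have c_out: "c i = 0" if "i \<notin> emb ` ?IG" for i
  proof (rule ccontr)
    assume nz: "c i \<noteq> 0"
    then have m: "fst (fst i) = D \<and> fst (fst (snd i)) = L \<and> fst (snd (snd i)) = K" by (auto simp: c_def split: if_splits)
    let ?j = "(snd (fst i), snd (fst (snd i)), snd (snd (snd i)))"
    have "i = emb ?j" using m by (auto simp: emb_def prod_eq_iff)
    then have "?j \<notin> ?IG" using that by blast
    then have "d ?j = 0" using d0 by blast
    then have "c i = 0" using m by (simp add: c_def)
    then show False using nz by simp
  qed
  have sub: "emb ` ?IG \<subseteq> I" using embI by blast
  have c0: "\<forall>i. i \<notin> I \<longrightarrow> c i = 0" using c_out sub by blast
  have cD: "\<forall>i. c i \<noteq> 0 \<longrightarrow> fst (fst i) = D_class y" using D_def by (auto simp: c_def split: if_splits)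
  have "tsa_delta y z = (\<Sum>i\<in>I. c i * CI i z)" for z
  proof -
    have "(\<Sum>i\<in>I. c i * CI i z) = (\<Sum>i\<in>emb ` ?IG. c i * CI i z)"
      by (rule sum.mono_neutral_right[OF I_fin sub]) (use c_out in auto)
    also have "\<dots> = (\<Sum>j\<in>?IG. c (emb j) * CI (emb j) z)"
    proof -
      have "inj_on emb ?IG" using inj inj_on_subset by blast
      from sum.reindex[OF this, of "\<lambda>i. c i * CI i z"] show ?thesis by (simp add: comp_def)
    qed
    also have "\<dots> = (\<Sum>j\<in>?IG. b * (d j * Phi L K (CD D (fst j) (fst (snd j)) (snd (snd j))) z))"
      by (rule sum.cong) (auto simp: c_def emb_def)
    also have "\<dots> = b * Phi L K (\<lambda>z. \<Sum>j\<in>?IG. d j * CD D (fst j) (fst (snd j)) (snd (snd j)) z) z"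
      by (simp add: Phi_lin sum_distrib_left)
    also have "\<dots> = b * Phi L K (tsa_delta g) z" using dexp by simp
    also have "\<dots> = (beta L K g * b) * tsa_delta y z" using yeq by (simp add: Phi_delta)
    finally show ?thesis using b by simp
  qed
  then show ?thesis using c0 cD by blast
qed

lemma basis_ex: "\<exists>c. (\<forall>i. i \<notin> I \<longrightarrow> c i = 0) \<and> f = (\<lambda>z. \<Sum>i\<in>I. c i * CI i z)"
proof -
  have ex: "\<forall>y. \<exists>c. (\<forall>i. i \<notin> I \<longrightarrow> c i = 0) \<and> tsa_delta y = (\<lambda>z. \<Sum>i\<in>I. c i * CI i z)"
    using delta_exp by blast
  obtain cy where cy: "\<forall>y. (\<forall>i. i \<notin> I \<longrightarrow> cy y i = 0) \<and> tsa_delta y = (\<lambda>z. \<Sum>i\<in>I. cy y i * CI i z)"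
    using choice[OF ex] by blast
  define c where "c i = (\<Sum>y\<in>UNIV. f y * cy y i)" for i
  have "\<forall>i. i \<notin> I \<longrightarrow> c i = 0" using cy by (simp add: c_def)
  moreover have "f z = (\<Sum>i\<in>I. c i * CI i z)" for z
  proof -
    have "(\<Sum>i\<in>I. c i * CI i z) = (\<Sum>i\<in>I. \<Sum>y\<in>UNIV. f y * (cy y i * CI i z))"
      by (simp add: c_def sum_distrib_right mult.assoc)
    also have "\<dots> = (\<Sum>y\<in>UNIV. f y * (\<Sum>i\<in>I. cy y i * CI i z))"
      by (subst sum.swap) (simp add: sum_distrib_left)
    also have "\<dots> = (\<Sum>y\<in>UNIV. f y * tsa_delta y z)"
      using cy by (metis (no_types))
    also have "\<dots> = f z" using expand[of f z] by simp
    finally show ?thesis by simp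
  qed
  ultimately show ?thesis by blast
qed

lemma ex1_eq: "\<exists>!x. P x \<Longrightarrow> P a \<Longrightarrow> P b \<Longrightarrow> a = b" by blast

lemma indep:
  assumes d0: "\<forall>i. i \<notin> I \<longrightarrow> d i = 0" and dz: "\<forall>z. (\<Sum>i\<in>I. d i * CI i z) = 0"
  shows "d i0 = 0"
proof (cases "i0 \<in> I")
  case False then show ?thesis using d0 by blast
next
  case True
  have "i0 = ((fst (fst i0), snd (fst i0)), (fst (fst (snd i0)), snd (fst (snd i0))), (fst (snd (snd i0)), snd (snd (snd i0))))" by simp
  then obtain D l0 L s0 K t0 where i0: "i0 = ((D,l0),(L,s0),(K,t0))" by blast
  have D: "D \<in> D_classes" and l0: "l0 \<in> \<Lambda>D D" and L: "L \<in> L_classes_in D" and s0: "s0 \<in> MD D l0"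
    and K: "K \<in> L_classes_in D" and t0: "t0 \<in> MD D l0" using True i0 I_iff by auto
  let ?IG = "cell_index (\<Lambda>D D) (MD D)"
  let ?CD = "\<lambda>j. CD D (fst j) (fst (snd j)) (snd (snd j))"
  define emb where "emb j = ((D, fst j), (L, fst (snd j)), (K, snd (snd j)))" for j :: "'l \<times> 'm \<times> 'm"
  have embI: "emb j \<in> I" if "j \<in> ?IG" for j
    using that D L K by (cases j) (auto simp: emb_def cell_index_def)
  have inj: "inj emb" by (rule injI) (auto simp: emb_def prod_eq_iff)
  have sub: "emb ` ?IG \<subseteq> I" using embI by blast
  have carr: "?CD j \<in> tsa_carrier (G D)" if "j \<in> ?IG" for j
    using that G_carr[OF D] by (auto simp: cell_index_def)
  define d' where "d' j = (if j \<in> ?IG then d (emb j) else 0)" for j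
  have S0: "(\<Sum>j\<in>?IG. d' j * ?CD j g) = 0" for g
  proof (cases "g \<in> G D")
    case False
    then have "?CD j g = 0" if "j \<in> ?IG" for j using carr[OF that] by (auto simp: tsa_carrier_def)
    then show ?thesis by simp
  next
    case g: True
    let ?z = "st (u L) * g * u K"
    have "0 = (\<Sum>i\<in>I. d i * CI i ?z)" using dz by simp
    also have "\<dots> = (\<Sum>i\<in>emb ` ?IG. d i * CI i ?z)"
    proof (rule sum.mono_neutral_right[OF I_fin sub], rule ballI)
      fix i assume i: "i \<in> I - emb ` ?IG"
      have "i = ((fst (fst i), snd (fst i)), (fst (fst (snd i)), snd (fst (snd i))), (fst (snd (snd i)), snd (snd (snd i))))" by simp
      then obtain D' l L' s K' t where ie: "i = ((D',l),(L',s),(K',t))" by blast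
      have D': "D' \<in> D_classes" and l: "l \<in> \<Lambda>D D'" and L': "L' \<in> L_classes_in D'" and s: "s \<in> MD D' l"
        and K': "K' \<in> L_classes_in D'" and t: "t \<in> MD D' l" using i ie I_iff by auto
      have "CI i ?z = 0"
      proof (rule ccontr)
        assume "CI i ?z \<noteq> 0"
        then have "Phi L' K' (CD D' l s t) ?z \<noteq> 0" using ie by simp
        then obtain g' where g': "g' \<in> G D'" and zeq: "?z = st (u L') * g' * u K'"
          using Phi_nz[OF D' G_carr[OF D' l s t]] by blast
        have "D' = D \<and> L' = L \<and> K' = K \<and> g' = g" using block_id[OF D L K g D' L' K' g' zeq] .
        then have "i = emb (l, s, t)" "(l,s,t) \<in> ?IG" using ie l s t by (auto simp: emb_def cell_index_def)
        then show False using i by blast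
      qed
      then show "d i * CI i ?z = 0" by simp
    qed
    also have "\<dots> = (\<Sum>j\<in>?IG. d (emb j) * CI (emb j) ?z)"
    proof -
      have "inj_on emb ?IG" using inj inj_on_subset by blast
      from sum.reindex[OF this, of "\<lambda>i. d i * CI i ?z"] show ?thesis by (simp add: comp_def)
    qed
    also have "\<dots> = (\<Sum>j\<in>?IG. beta L K g * (d' j * ?CD j g))"
    proof (rule sum.cong[OF refl])
      fix j assume j: "j \<in> ?IG"
      have "CI (emb j) ?z = Phi L K (?CD j) ?z" by (simp add: emb_def)
      also have "\<dots> = beta L K g * ?CD j g" by (rule Phi_at[OF D L K g carr[OF j]])
      finally show "d (emb j) * CI (emb j) ?z = beta L K g * (d' j * ?CD j g)"
        using j by (simp add: d'_def mult_ac)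
    qed
    also have "\<dots> = beta L K g * (\<Sum>j\<in>?IG. d' j * ?CD j g)" by (simp add: sum_distrib_left)
    finally have e: "beta L K g * (\<Sum>j\<in>?IG. d' j * ?CD j g) = 0" by simp
    obtain b where b: "beta L K g * b = 1" using beta_unit[OF D L K g] by blast
    have "(\<Sum>j\<in>?IG. d' j * ?CD j g) = (beta L K g * b) * (\<Sum>j\<in>?IG. d' j * ?CD j g)" using b by simp
    also have "\<dots> = b * (beta L K g * (\<Sum>j\<in>?IG. d' j * ?CD j g))" by (simp add: mult_ac)
    finally show ?thesis using e by simp
  qed
  have zc: "(\<lambda>z. 0) \<in> tsa_carrier (G D)" by (simp add: tsa_carrier_def)
  have P1: "(\<forall>j. j \<notin> ?IG \<longrightarrow> d' j = 0) \<and> (\<lambda>z. 0) = (\<lambda>z. \<Sum>j\<in>?IG. d' j * ?CD j z)"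
    using S0 by (auto simp: d'_def)
  have P2: "(\<forall>j. j \<notin> ?IG \<longrightarrow> (\<lambda>_. 0) j = 0) \<and> (\<lambda>z. 0) = (\<lambda>z. \<Sum>j\<in>?IG. (\<lambda>_. 0) j * ?CD j z)"
    by simp
  have "d' = (\<lambda>_. 0)" by (rule ex1_eq[where P="\<lambda>c. (\<forall>j. j \<notin> ?IG \<longrightarrow> c j = 0) \<and> (\<lambda>z. 0) = (\<lambda>z. \<Sum>j\<in>?IG. c j * ?CD j z)", OF G_basis[OF D zc] P1 P2])
  then have "d' (l0, s0, t0) = 0" by simp
  moreover have "(l0, s0, t0) \<in> ?IG" using l0 s0 t0 by (simp add: cell_index_def)
  ultimately show ?thesis by (simp add: d'_def emb_def i0)
qed

lemma basis_unique:
  assumes c1: "(\<forall>i. i \<notin> I \<longrightarrow> c1 i = 0) \<and> f = (\<lambda>z. \<Sum>i\<in>I. c1 i * CI i z)"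
    and c2: "(\<forall>i. i \<notin> I \<longrightarrow> c2 i = 0) \<and> f = (\<lambda>z. \<Sum>i\<in>I. c2 i * CI i z)"
  shows "c1 = c2"
proof
  fix i
  define d where "d i = c1 i - c2 i" for i
  have "\<forall>i. i \<notin> I \<longrightarrow> d i = 0" using c1 c2 by (simp add: d_def)
  moreover have "\<forall>z. (\<Sum>i\<in>I. d i * CI i z) = 0"
  proof
    fix z
    have "(\<Sum>i\<in>I. d i * CI i z) = (\<Sum>i\<in>I. c1 i * CI i z) - (\<Sum>i\<in>I. c2 i * CI i z)"
      by (simp add: d_def left_diff_distrib sum_subtractf)
    also have "\<dots> = f z - f z"
    proof -
      from conjunct2[OF c1] have "f z = (\<lambda>z. \<Sum>i\<in>I. c1 i * CI i z) z" by (rule fun_cong)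
      moreover from conjunct2[OF c2] have "f z = (\<lambda>z. \<Sum>i\<in>I. c2 i * CI i z) z" by (rule fun_cong)
      ultimately show ?thesis by simp
    qed
    finally show "(\<Sum>i\<in>I. d i * CI i z) = 0" by simp
  qed
  ultimately have "d i = 0" by (rule indep)
  then show "c1 i = c2 i" by (simp add: d_def)
qed

lemma basis: "\<forall>f\<in>tsa_carrier UNIV. \<exists>!c. (\<forall>i. i \<notin> I \<longrightarrow> c i = 0) \<and>
         f = (\<lambda>z. \<Sum>i\<in>I. c i * CI i z)"
proof (intro ballI)
  fix f :: "'a \<Rightarrow> 'r"
  obtain c where c: "(\<forall>i. i \<notin> I \<longrightarrow> c i = 0) \<and> f = (\<lambda>z. \<Sum>i\<in>I. c i * CI i z)" using basis_ex by blast
  show "\<exists>!c. (\<forall>i. i \<notin> I \<longrightarrow> c i = 0) \<and> f = (\<lambda>z. \<Sum>i\<in>I. c i * CI i z)"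
  proof (rule ex1I[of _ c])
    show "(\<forall>i. i \<notin> I \<longrightarrow> c i = 0) \<and> f = (\<lambda>z. \<Sum>i\<in>I. c i * CI i z)" by (rule c)
  next
    fix c' assume "(\<forall>i. i \<notin> I \<longrightarrow> c' i = 0) \<and> f = (\<lambda>z. \<Sum>i\<in>I. c' i * CI i z)"
    then show "c' = c" using c by (rule basis_unique)
  qed
qed

end


context cs begin

lemma star_carrier: "\<forall>f\<in>(tsa_carrier UNIV :: ('a \<Rightarrow> 'r) set). star_lin st f \<in> tsa_carrier UNIV \<and> star_lin st (star_lin st f) = f"
  by (simp add: star_lin_def)

lemma star_mult: "\<forall>f\<in>tsa_carrier UNIV. \<forall>g\<in>tsa_carrier UNIV.
         star_lin st (tsa_mult UNIV \<alpha> f g) = tsa_mult UNIV \<alpha> (star_lin st g) (star_lin st f)"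
  using star_cv[OF inv asym] by blast

lemma star_Phi:
  "star_lin st (Phi L K c) = Phi K L (star_lin st c)"
proof -
  have "star_lin st (Phi L K c) = cv \<alpha> (tsa_delta (st (u K))) (cv \<alpha> (star_lin st c) (tsa_delta (u L)))"
    by (simp add: star_cv[OF inv asym] star_delta[OF inv])
  also have "\<dots> = Phi K L (star_lin st c)" by (simp add: cv_assoc_fun[OF tw])
  finally show ?thesis .
qed

lemma star_C: "\<forall>l\<in>Lam. \<forall>s\<in>MO l. \<forall>t\<in>MO l. star_lin st (CO l s t) = CO l t s"
proof (intro ballI)
  fix l s t assume l: "l \<in> Lam" and s: "s \<in> MO l" and t: "t \<in> MO l"
  obtain D x where le: "l = (D, x)" by (cases l)
  obtain L s1 where se: "s = (L, s1)" by (cases s)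
  obtain K t1 where te: "t = (K, t1)" by (cases t)
  have D: "D \<in> D_classes" "x \<in> \<Lambda>D D" "s1 \<in> MD D x" "t1 \<in> MD D x" using l s t le se te by auto
  show "star_lin st (CO l s t) = CO l t s"
    unfolding le se te using G_star[OF D] by (simp add: star_Phi)
qed

definition low where "low l0 = cell_lower Lam leO MO CO l0"
definition Il where "Il l0 = {i\<in>I. leO (fst i) l0 \<and> fst i \<noteq> l0}"

lemma low_iff: "f \<in> low l0 \<longleftrightarrow> (\<exists>c. f = (\<lambda>z. \<Sum>i\<in>Il l0. c i * CI i z))"
  by (simp add: low_def Il_def cell_lower_def)

lemma Il_fin: "finite (Il l0)" using I_fin by (simp add: Il_def)

lemma low_zero: "(\<lambda>z. 0) \<in> low l0"
  unfolding low_iff by (rule exI[of _ "\<lambda>_. 0"]) simp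

lemma low_add: "f \<in> low l0 \<Longrightarrow> g \<in> low l0 \<Longrightarrow> (\<lambda>z. f z + g z) \<in> low l0"
proof -
  assume "f \<in> low l0" "g \<in> low l0"
  then obtain c1 c2 where "f = (\<lambda>z. \<Sum>i\<in>Il l0. c1 i * CI i z)" "g = (\<lambda>z. \<Sum>i\<in>Il l0. c2 i * CI i z)"
    unfolding low_iff by blast
  then have "(\<lambda>z. f z + g z) = (\<lambda>z. \<Sum>i\<in>Il l0. (c1 i + c2 i) * CI i z)"
    by (simp add: sum.distrib distrib_right)
  then show ?thesis unfolding low_iff by - (rule exI, assumption)
qed

lemma low_smult: "f \<in> low l0 \<Longrightarrow> (\<lambda>z. k * f z) \<in> low l0"
proof -
  assume "f \<in> low l0"
  then obtain c1 where "f = (\<lambda>z. \<Sum>i\<in>Il l0. c1 i * CI i z)" unfolding low_iff by blast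
  then have "(\<lambda>z. k * f z) = (\<lambda>z. \<Sum>i\<in>Il l0. (k * c1 i) * CI i z)"
    by (simp add: sum_distrib_left mult.assoc)
  then show ?thesis unfolding low_iff by - (rule exI, assumption)
qed

lemma low_sum: "finite A \<Longrightarrow> (\<forall>x\<in>A. F x \<in> low l0) \<Longrightarrow> (\<lambda>z. \<Sum>x\<in>A. F x z) \<in> low l0"
proof (induction A rule: finite_induct)
  case empty then show ?case using low_zero by simp
next
  case (insert a A)
  then have "(\<lambda>z. F a z + (\<Sum>x\<in>A. F x z)) \<in> low l0" using low_add[of "F a" l0] by simp
  then show ?case using insert by simp
qed

lemma low_CI: "i \<in> Il l0 \<Longrightarrow> CI i \<in> low l0"
proof -
  assume i: "i \<in> Il l0"
  have "CI i = (\<lambda>z. \<Sum>j\<in>Il l0. (if j = i then 1 else 0) * CI j z)"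
  proof
    fix z
    have "(\<Sum>j\<in>Il l0. (if j = i then 1 else 0) * CI j z) = (\<Sum>j\<in>Il l0. if j = i then CI i z else 0)"
      by (rule sum.cong) auto
    then show "CI i z = (\<Sum>j\<in>Il l0. (if j = i then 1 else 0) * CI j z)" using i Il_fin by simp
  qed
  then show ?thesis unfolding low_iff by - (rule exI, assumption)
qed

lemma low_combo:
  assumes "\<forall>i\<in>I. c i \<noteq> 0 \<longrightarrow> i \<in> Il l0"
  shows "(\<lambda>z. \<Sum>i\<in>I. c i * CI i z) \<in> low l0"
proof (rule low_sum[OF I_fin], rule ballI)
  fix i assume i: "i \<in> I"
  show "(\<lambda>z. c i * CI i z) \<in> low l0"
  proof (cases "c i = 0")
    case True then show ?thesis using low_zero by simp
  next
    case False then show ?thesis using assms i low_smult low_CI by blast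
  qed
qed

lemma low_delta:
  assumes D0: "D0 \<in> D_classes" and less: "D_less (D_class y) D0"
  shows "tsa_delta y \<in> low (D0, l0)"
proof -
  obtain c where c0: "\<forall>i. i \<notin> I \<longrightarrow> c i = 0" and cD: "\<forall>i. c i \<noteq> 0 \<longrightarrow> fst (fst i) = D_class y"
    and e: "tsa_delta y = (\<lambda>z. \<Sum>i\<in>I. c i * CI i z)" using delta_exp by blast
  have "\<forall>i\<in>I. c i \<noteq> 0 \<longrightarrow> i \<in> Il (D0, l0)"
  proof (intro ballI impI)
    fix i assume i: "i \<in> I" "c i \<noteq> 0"
    then have f: "fst (fst i) = D_class y" using cD by blast
    obtain D' l' where fi: "fst i = (D', l')" by (cases "fst i")
    have "D' = D_class y" using f fi by simp
    then have "leO (fst i) (D0, l0) \<and> fst i \<noteq> (D0, l0)" using less fi D_less_def by auto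
    then show "i \<in> Il (D0, l0)" using i by (simp add: Il_def)
  qed
  then show ?thesis using e low_combo by simp
qed

lemma Phi_add: "Phi L K (\<lambda>z. f z + g z) z = Phi L K f z + Phi L K g z"
proof -
  have "(\<lambda>z. f z + g z) = (\<lambda>z. \<Sum>b\<in>UNIV. 1 * (if b then f else g) z)"
    by (simp add: UNIV_bool add.commute)
  then have "Phi L K (\<lambda>z. f z + g z) z = (\<Sum>b\<in>UNIV. 1 * Phi L K (if b then f else g) z)"
    by (simp only: Phi_lin)
  then show ?thesis by (simp add: UNIV_bool add.commute)
qed

context
  fixes D0 :: "'a set" and l0 and L :: "'a set" and s1 and x :: 'a
  assumes D0: "D0 \<in> D_classes" and l0: "l0 \<in> \<Lambda>D D0" and L: "L \<in> L_classes_in D0" and s1: "s1 \<in> MD D0 l0"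
begin

lemma C3_B:
  assumes nD: "x * st (u L) \<notin> D0" and K: "K \<in> L_classes_in D0" and t1: "t1 \<in> MD D0 l0"
  shows "cv \<alpha> (tsa_delta x) (Phi L K (CD D0 l0 s1 t1)) \<in> low (D0, l0)"
proof -
  let ?F = "Phi L K (CD D0 l0 s1 t1)"
  have carr: "CD D0 l0 s1 t1 \<in> tsa_carrier (G D0)" using G_carr[OF D0 l0 s1 t1] .
  have e: "cv \<alpha> (tsa_delta x) ?F = (\<lambda>z. \<Sum>w\<in>UNIV. (\<alpha> x w * ?F w) * tsa_delta (x*w) z)"
  proof
    fix z
    show "cv \<alpha> (tsa_delta x) ?F z = (\<Sum>w\<in>UNIV. (\<alpha> x w * ?F w) * tsa_delta (x*w) z)"
      unfolding delta_left by (rule sum.cong) auto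
  qed
  have "(\<lambda>z. (\<alpha> x w * ?F w) * tsa_delta (x*w) z) \<in> low (D0, l0)" for w
  proof (cases "?F w = 0")
    case True then show ?thesis using low_zero by simp
  next
    case False
    then obtain g where g: "g \<in> G D0" and weq: "w = st (u L) * g * u K"
      using Phi_nz[OF D0 carr] by blast
    have Jw: "J_le (x*w) (x * st (u L))" unfolding weq J_le_def by (metis mult.assoc)
    have vD: "st (u L) \<in> D0" using st_D[OF D0 uL_D[OF D0 L]] .
    have J1: "J_le (x * st (u L)) (one D0)"
      using vD mem_D[OF D0] J_le_mult2 J_le_trans by blast
    have "D_le (D_class (x*w)) (D_class (one D0))" using D_le_iff Jw J1 J_le_trans by blast
    moreover have "D_class (x*w) \<noteq> D0"
    proof
      assume "D_class (x*w) = D0"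
      then have "x*w \<in> D0" using D_class_self by metis
      then have "J_le (one D0) (x*w)" using mem_D[OF D0] by blast
      then have "J_le (one D0) (x * st (u L))" using Jw J_le_trans by blast
      then have "x * st (u L) \<in> D0" using J1 mem_D[OF D0] by blast
      then show False using nD by simp
    qed
    ultimately have "D_less (D_class (x*w)) D0" using D_eq[OF D0] D_less_def by metis
    then have "tsa_delta (x*w) \<in> low (D0, l0)" using low_delta[OF D0] by blast
    then show ?thesis using low_smult by blast
  qed
  then show ?thesis unfolding e by (intro low_sum) auto
qed

lemma C3_A:
  assumes inD: "x * st (u L) \<in> D0"
  shows "\<exists>r. \<forall>K\<in>L_classes_in D0. \<forall>t1\<in>MD D0 l0.
     (\<lambda>z. cv \<alpha> (tsa_delta x) (Phi L K (CD D0 l0 s1 t1)) z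
        - (\<Sum>s'\<in>L_classes_in D0 \<times> MD D0 l0. r s' * CO (D0,l0) s' (K,t1) z)) \<in> low (D0,l0)"
proof -
  obtain L' h where L': "L' \<in> L_classes_in D0" and h: "h \<in> G D0" and xe: "x * st (u L) = st (u L') * h"
    using left_mult_D[OF D0 L inD] by blast
  have hR: "R_eq h (one D0)" using h H_class_iff by blast
  obtain \<gamma> where \<gamma>: "\<alpha> (st (u L')) h * \<gamma> = 1" using unit D0 vL_L[OF D0 L'] hR by blast
  have dh: "tsa_delta h \<in> tsa_carrier (G D0)" using h by (auto simp: tsa_carrier_def)
  obtain rG where rG: "\<forall>t\<in>MD D0 l0. (\<lambda>z. tsa_mult (G D0) \<alpha> (tsa_delta h) (CD D0 l0 s1 t) z
      - (\<Sum>s'\<in>MD D0 l0. rG s' * CD D0 l0 s' t z)) \<in> cell_lower (\<Lambda>D D0) (leD D0) (MD D0) (CD D0) l0"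
    using G_C3[OF D0 l0 s1 dh] by blast
  define k where "k = \<alpha> x (st (u L)) * \<gamma>"
  define r where "r = (\<lambda>(L'',s''). if L'' = L' then k * rG s'' else 0)"
  let ?IG = "cell_index (\<Lambda>D D0) (MD D0)"
  let ?IGl = "{j \<in> ?IG. leD D0 (fst j) l0 \<and> fst j \<noteq> l0}"
  let ?CD = "\<lambda>j. CD D0 (fst j) (fst (snd j)) (snd (snd j))"
  have "finite ?IG" using cell_index_fin[OF G_fin[OF D0]] G_finM[OF D0] by blast
  then have IGl_fin: "finite ?IGl" by simp
  show ?thesis
  proof (intro exI[of _ r] ballI)
    fix K t1 assume K: "K \<in> L_classes_in D0" and t1: "t1 \<in> MD D0 l0"
    let ?c = "CD D0 l0 s1 t1"
    have c: "?c \<in> tsa_carrier (G D0)" using G_carr[OF D0 l0 s1 t1] .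
    have dd: "cv \<alpha> (tsa_delta x) (tsa_delta (st (u L))) = (\<lambda>z. k * cv \<alpha> (tsa_delta (st (u L'))) (tsa_delta h) z)"
    proof
      fix z
      have "k * cv \<alpha> (tsa_delta (st (u L'))) (tsa_delta h) z = \<alpha> x (st (u L)) * (\<alpha> (st (u L')) h * \<gamma>) * tsa_delta (st (u L') * h) z"
        by (simp add: k_def delta_delta mult_ac)
      then show "cv \<alpha> (tsa_delta x) (tsa_delta (st (u L))) z = k * cv \<alpha> (tsa_delta (st (u L'))) (tsa_delta h) z"
        using \<gamma> xe by (simp add: delta_delta)
    qed
    have key: "cv \<alpha> (tsa_delta x) (Phi L K ?c) z = k * Phi L' K (cv \<alpha> (tsa_delta h) ?c) z" for z
    proof -
      have "cv \<alpha> (tsa_delta x) (Phi L K ?c) = cv \<alpha> (cv \<alpha> (cv \<alpha> (tsa_delta x) (tsa_delta (st (u L)))) ?c) (tsa_delta (u K))"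
        by (simp add: cv_assoc_fun[OF tw])
      also have "\<dots> = cv \<alpha> (\<lambda>z. k * cv \<alpha> (cv \<alpha> (tsa_delta (st (u L'))) (tsa_delta h)) ?c z) (tsa_delta (u K))"
        unfolding dd by (subst cv_smult_left[abs_def]) simp
      finally have "cv \<alpha> (tsa_delta x) (Phi L K ?c) z = k * cv \<alpha> (cv \<alpha> (cv \<alpha> (tsa_delta (st (u L'))) (tsa_delta h)) ?c) (tsa_delta (u K)) z"
        by (simp add: cv_smult_left)
      also have "\<dots> = k * Phi L' K (cv \<alpha> (tsa_delta h) ?c) z" by (simp add: cv_assoc_fun[OF tw])
      finally show ?thesis .
    qed
    have hc: "cv \<alpha> (tsa_delta h) ?c = tsa_mult (G D0) \<alpha> (tsa_delta h) ?c" using tsa_mult_G[OF dh c] by simp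
    obtain cl where cl: "(\<lambda>z. tsa_mult (G D0) \<alpha> (tsa_delta h) ?c z - (\<Sum>s'\<in>MD D0 l0. rG s' * CD D0 l0 s' t1 z))
        = (\<lambda>z. \<Sum>j\<in>?IGl. cl j * ?CD j z)"
      using rG t1 unfolding cell_lower_def by blast
    have hc2: "cv \<alpha> (tsa_delta h) ?c = (\<lambda>z. (\<Sum>s'\<in>MD D0 l0. rG s' * CD D0 l0 s' t1 z) + (\<Sum>j\<in>?IGl. cl j * ?CD j z))"
    proof
      fix z
      have "tsa_mult (G D0) \<alpha> (tsa_delta h) ?c z - (\<Sum>s'\<in>MD D0 l0. rG s' * CD D0 l0 s' t1 z) = (\<Sum>j\<in>?IGl. cl j * ?CD j z)"
        using fun_cong[OF cl, of z] by simp
      then show "cv \<alpha> (tsa_delta h) ?c z = (\<Sum>s'\<in>MD D0 l0. rG s' * CD D0 l0 s' t1 z) + (\<Sum>j\<in>?IGl. cl j * ?CD j z)"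
        unfolding hc by (simp add: algebra_simps)
    qed
    have rsum: "(\<Sum>s'\<in>L_classes_in D0 \<times> MD D0 l0. r s' * CO (D0,l0) s' (K,t1) z)
        = k * (\<Sum>s'\<in>MD D0 l0. rG s' * Phi L' K (CD D0 l0 s' t1) z)" for z
    proof -
      have "(\<Sum>s'\<in>L_classes_in D0 \<times> MD D0 l0. r s' * CO (D0,l0) s' (K,t1) z)
          = (\<Sum>L''\<in>L_classes_in D0. \<Sum>s''\<in>MD D0 l0. r (L'',s'') * CO (D0,l0) (L'',s'') (K,t1) z)"
        by (subst sum.cartesian_product) (simp add: split_def CO_def)
      also have "\<dots> = (\<Sum>L''\<in>L_classes_in D0. if L'' = L' then (\<Sum>s''\<in>MD D0 l0. k * rG s'' * Phi L' K (CD D0 l0 s'' t1) z) else 0)"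
        by (rule sum.cong) (auto simp: r_def)
      also have "\<dots> = (\<Sum>s''\<in>MD D0 l0. k * rG s'' * Phi L' K (CD D0 l0 s'' t1) z)"
        using L' LD_fin[OF D0] by simp
      finally show ?thesis by (simp add: sum_distrib_left mult.assoc)
    qed
    define emb where "emb j = ((D0, fst j), (L', fst (snd j)), (K, snd (snd j)))" for j :: "'l \<times> 'm \<times> 'm"
    have diff: "(\<lambda>z. cv \<alpha> (tsa_delta x) (Phi L K ?c) z
        - (\<Sum>s'\<in>L_classes_in D0 \<times> MD D0 l0. r s' * CO (D0,l0) s' (K,t1) z))
        = (\<lambda>z. \<Sum>j\<in>?IGl. (k * cl j) * CI (emb j) z)"
    proof
      fix z
      have "cv \<alpha> (tsa_delta x) (Phi L K ?c) z = k * ((\<Sum>s'\<in>MD D0 l0. rG s' * Phi L' K (CD D0 l0 s' t1) z)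
          + (\<Sum>j\<in>?IGl. cl j * Phi L' K (?CD j) z))"
        unfolding key hc2 by (simp add: Phi_add Phi_lin)
      moreover have "(\<Sum>j\<in>?IGl. (k * cl j) * CI (emb j) z) = k * (\<Sum>j\<in>?IGl. cl j * Phi L' K (?CD j) z)"
        by (simp add: emb_def sum_distrib_left mult.assoc)
      ultimately show "cv \<alpha> (tsa_delta x) (Phi L K ?c) z
        - (\<Sum>s'\<in>L_classes_in D0 \<times> MD D0 l0. r s' * CO (D0,l0) s' (K,t1) z)
        = (\<Sum>j\<in>?IGl. (k * cl j) * CI (emb j) z)" using rsum by (simp add: algebra_simps)
    qed
    have "(\<lambda>z. \<Sum>j\<in>?IGl. (k * cl j) * CI (emb j) z) \<in> low (D0, l0)"
    proof (rule low_sum[OF IGl_fin], rule ballI)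
      fix j assume j: "j \<in> ?IGl"
      have "emb j \<in> Il (D0, l0)"
        using j D0 L' K by (cases j) (auto simp: emb_def Il_def cell_index_def)
      then show "(\<lambda>z. (k * cl j) * CI (emb j) z) \<in> low (D0, l0)" using low_CI low_smult by blast
    qed
    then show "(\<lambda>z. cv \<alpha> (tsa_delta x) (Phi L K ?c) z
        - (\<Sum>s'\<in>L_classes_in D0 \<times> MD D0 l0. r s' * CO (D0,l0) s' (K,t1) z)) \<in> low (D0, l0)"
      unfolding diff .
  qed
qed

end

end


context cs begin

lemma C3_delta:
  assumes D0: "D0 \<in> D_classes" and l0: "l0 \<in> \<Lambda>D D0" and L: "L \<in> L_classes_in D0" and s1: "s1 \<in> MD D0 l0"
  shows "\<exists>r. \<forall>K\<in>L_classes_in D0. \<forall>t1\<in>MD D0 l0.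
     (\<lambda>z. cv \<alpha> (tsa_delta x) (Phi L K (CD D0 l0 s1 t1)) z
        - (\<Sum>s'\<in>L_classes_in D0 \<times> MD D0 l0. r s' * CO (D0,l0) s' (K,t1) z)) \<in> low (D0,l0)"
proof (cases "x * st (u L) \<in> D0")
  case True then show ?thesis using C3_A[OF D0 l0 L s1] by blast
next
  case False
  show ?thesis
  proof (intro exI[of _ "\<lambda>_. 0"] ballI)
    fix K t1 assume "K \<in> L_classes_in D0" "t1 \<in> MD D0 l0"
    then show "(\<lambda>z. cv \<alpha> (tsa_delta x) (Phi L K (CD D0 l0 s1 t1)) z
        - (\<Sum>s'\<in>L_classes_in D0 \<times> MD D0 l0. 0 * CO (D0,l0) s' (K,t1) z)) \<in> low (D0,l0)"
      using C3_B[OF D0 l0 L s1 False] by simp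
  qed
qed

lemma C3: "\<forall>l\<in>Lam. \<forall>s\<in>MO l. \<forall>a\<in>tsa_carrier UNIV. \<exists>r. \<forall>t\<in>MO l.
         (\<lambda>z. tsa_mult UNIV \<alpha> a (CO l s t) z - (\<Sum>s'\<in>MO l. r s' * CO l s' t z))
           \<in> cell_lower Lam leO MO CO l"
proof (intro ballI)
  fix l s a assume l: "l \<in> Lam" and s: "s \<in> MO l"
  obtain D0 l0 where le: "l = (D0, l0)" by (cases l)
  obtain L s1 where se: "s = (L, s1)" by (cases s)
  have D0: "D0 \<in> D_classes" and l0: "l0 \<in> \<Lambda>D D0" and L: "L \<in> L_classes_in D0" and s1: "s1 \<in> MD D0 l0"
    using l s le se by auto
  have ex: "\<forall>x. \<exists>r. \<forall>K\<in>L_classes_in D0. \<forall>t1\<in>MD D0 l0.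
     (\<lambda>z. cv \<alpha> (tsa_delta x) (Phi L K (CD D0 l0 s1 t1)) z
        - (\<Sum>s'\<in>L_classes_in D0 \<times> MD D0 l0. r s' * CO (D0,l0) s' (K,t1) z)) \<in> low (D0,l0)"
    using C3_delta[OF D0 l0 L s1] by blast
  obtain R where R: "\<forall>x. \<forall>K\<in>L_classes_in D0. \<forall>t1\<in>MD D0 l0.
     (\<lambda>z. cv \<alpha> (tsa_delta x) (Phi L K (CD D0 l0 s1 t1)) z
        - (\<Sum>s'\<in>L_classes_in D0 \<times> MD D0 l0. R x s' * CO (D0,l0) s' (K,t1) z)) \<in> low (D0,l0)"
    using choice[OF ex] by blast
  define r where "r s' = (\<Sum>x\<in>UNIV. a x * R x s')" for s'
  show "\<exists>r. \<forall>t\<in>MO l.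
         (\<lambda>z. tsa_mult UNIV \<alpha> a (CO l s t) z - (\<Sum>s'\<in>MO l. r s' * CO l s' t z))
           \<in> cell_lower Lam leO MO CO l"
  proof (intro exI[of _ r] ballI)
    fix t assume t: "t \<in> MO l"
    obtain K t1 where te: "t = (K, t1)" by (cases t)
    have K: "K \<in> L_classes_in D0" and t1: "t1 \<in> MD D0 l0" using t te le by auto
    let ?dx = "\<lambda>x z. cv \<alpha> (tsa_delta x) (Phi L K (CD D0 l0 s1 t1)) z
        - (\<Sum>s'\<in>L_classes_in D0 \<times> MD D0 l0. R x s' * CO (D0,l0) s' (K,t1) z)"
    have eq: "(\<lambda>z. tsa_mult UNIV \<alpha> a (CO l s t) z - (\<Sum>s'\<in>MO l. r s' * CO l s' t z))
        = (\<lambda>z. \<Sum>x\<in>UNIV. a x * ?dx x z)"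
    proof
      fix z
      have "tsa_mult UNIV \<alpha> a (CO l s t) z = (\<Sum>x\<in>UNIV. a x * cv \<alpha> (tsa_delta x) (Phi L K (CD D0 l0 s1 t1)) z)"
        unfolding le se te by (simp add: cv_expand_left[of _ a])
      moreover have "(\<Sum>s'\<in>MO l. r s' * CO l s' t z)
          = (\<Sum>x\<in>UNIV. a x * (\<Sum>s'\<in>L_classes_in D0 \<times> MD D0 l0. R x s' * CO (D0,l0) s' (K,t1) z))"
        unfolding le te r_def by (simp add: sum_distrib_left sum_distrib_right mult.assoc sum.swap[of _ UNIV])
      ultimately show "tsa_mult UNIV \<alpha> a (CO l s t) z - (\<Sum>s'\<in>MO l. r s' * CO l s' t z)
          = (\<Sum>x\<in>UNIV. a x * ?dx x z)"
        by (simp add: right_diff_distrib sum_subtractf)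
    qed
    have "(\<lambda>z. \<Sum>x\<in>UNIV. a x * ?dx x z) \<in> low (D0, l0)"
      using R K t1 by (intro low_sum) (auto intro: low_smult)
    then have X: "(\<lambda>z. \<Sum>x\<in>UNIV. a x * ?dx x z) \<in> cell_lower Lam leO MO CO l"
      unfolding low_def le .
    show "(\<lambda>z. tsa_mult UNIV \<alpha> a (CO l s t) z - (\<Sum>s'\<in>MO l. r s' * CO l s' t z))
           \<in> cell_lower Lam leO MO CO l" by (subst eq) (rule X)
  qed
qed

lemma main: "cellular UNIV \<alpha> st Lam leO MO CO"
  unfolding cellular_def
  apply (intro conjI)
  apply (rule Lam_fin)
  apply (rule order_refl)
  apply (rule order_antisym)
  apply (rule order_trans)
  apply (rule M_fin)
  apply simp
  apply (rule basis)
  apply (rule star_carrier)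
  apply (rule star_mult)
  apply (rule star_C)
  apply (rule C3)
  done

end



theorem corollary6:
  fixes st :: "'a::{finite,semigroup_mult} \<Rightarrow> 'a"
    and \<alpha> :: "'a \<Rightarrow> 'a \<Rightarrow> 'r::comm_ring_1"
    and one :: "'a set \<Rightarrow> 'a"
    and \<Lambda>D :: "'a set \<Rightarrow> 'l set"
    and leD :: "'a set \<Rightarrow> 'l \<Rightarrow> 'l \<Rightarrow> bool"
    and MD :: "'a set \<Rightarrow> 'l \<Rightarrow> 'm set"
    and CD :: "'a set \<Rightarrow> 'l \<Rightarrow> 'm \<Rightarrow> 'm \<Rightarrow> 'a \<Rightarrow> 'r"
    and u :: "'a set \<Rightarrow> 'a"
  assumes "anti_involution st"
    and "twisting \<alpha>"
    and "\<forall>x y. \<alpha> x y = \<alpha> (st y) (st x)"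
    and "\<forall>D\<in>D_classes. one D \<in> D \<and> one D * one D = one D \<and> st (one D) = one D"
    and "\<forall>D\<in>D_classes. \<forall>x y. L_eq x (one D) \<and> R_eq y (one D) \<longrightarrow> (\<exists>v. \<alpha> x y * v = 1)"
    and "\<forall>D\<in>D_classes. cellular (H_class (one D)) \<alpha> st (\<Lambda>D D) (leD D) (MD D) (CD D)"
    and "\<forall>D\<in>D_classes. \<forall>L\<in>L_classes_in D. u L \<in> L \<and> R_eq (u L) (one D)"
  shows "cellular UNIV \<alpha> st
           {(D, l). D \<in> D_classes \<and> l \<in> \<Lambda>D D}
           (\<lambda>(D1, l1) (D2, l2). D_less D1 D2 \<or> (D1 = D2 \<and> leD D1 l1 l2))
           (\<lambda>(D, l). L_classes_in D \<times> MD D l)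
           (\<lambda>(D, l) (L, s) (K, t).
              tsa_mult UNIV \<alpha> (tsa_mult UNIV \<alpha> (tsa_delta (st (u L))) (CD D l s t)) (tsa_delta (u K)))"
proof -
  interpret cs st \<alpha> one \<Lambda>D leD MD CD u by (rule cs.intro[OF assms])
  show ?thesis using main unfolding Lam_def leO_def MO_def CO_def .
qed

end
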